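(* Let $n\ge 1$. For $a\in\{0,1\}$ let $\lvert \hat a\rangle=\frac{1}{\sqrt2}(\lvert 0\rangle+(-1)^a\lvert 1\rangle)$. For bits $r_0,r_1,s\in\{0,1\}$ define the two-qubit state on qubits $A_0A_1$ $$\lvert\psi^{s}_{r_0r_1}\rangle_{A_0A_1}=\lvert r_0\rangle_{A_s}\otimes\lvert \hat r_1\rangle_{A_{\bar s}},$$ and for strings $\mathbf r_0,\mathbf r_1,\mathbf s\in\{0,1\}^n$ (with $j$-th entries $r_0^j,r_1^j,s^j$) define the $2n$-qubit state $\lvert\Psi^{\mathbf s}_{\mathbf r_0\mathbf r_1}\rangle_A=\bigotimes_{j=1}^n\lvert\psi^{s^j}_{r_0^jr_1^j}\rangle_{A_0^jA_1^j}$, where $A=A_0^1A_1^1\cdots A_0^nA_1^n$. Consider any (cheating) strategy consisting of: a finite-dimensional ancilla $E$ in a fixed pure state $\lvert\chi\rangle_E$; a unitary $U$ on $AE$, where $AE=B_0B_1B'$ is decomposed into three finite-dimensional subsystems; a projective measurement $\{R^{b'}\}_{b'\in\{0,1\}}$ on $B'$; and, for each $i\in\{0,1\}$, $\mathbf s\in\{0,1\}^n$, $b'\in\{0,1\}$, a projective measurement $\{\Pi^{\mathbf e}_{i\mathbf s b'}\}_{\mathbf e\in\{0,1\}^n}$ on $B_i$. Let $\lvert\Phi^{\mathbf s}_{\mathbf r_0\mathbf r_1}\rangle_{B_0B_1B'}=U(\lvert\Psi^{\mathbf s}_{\mathbf r_0\mathbf r_1}\rangle_A\otimes\lvert\chi\rangle_E)$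 and $$p_n=\frac{1}{2^{3n}}\sum_{\mathbf r_0,\mathbf r_1,\mathbf s\in\{0,1\}^n}\ \sum_{b'\in\{0,1\}}\langle\Phi^{\mathbf s}_{\mathbf r_0\mathbf r_1}\rvert\,\Pi^{\mathbf r_{b'}}_{0\mathbf s b'}\otimes\Pi^{\mathbf r_{\bar b'}}_{1\mathbf s b'}\otimes R^{b'}\,\lvert\Phi^{\mathbf s}_{\mathbf r_0\mathbf r_1}\rangle,$$ where $\bar b'=b'\oplus1$. Then for every such strategy, $$p_n\le\Bigl(\frac12+\frac{1}{2\sqrt2}\Bigr)^n.$$
   Context: $p_n$ is the probability that Bob, in a spacetime-constrained oblivious transfer protocol, simultaneously outputs $\mathbf r_{b'}$ from system $B_0$ and $\mathbf r_{\bar b'}$ from system $B_1$, when $\mathbf r_0,\mathbf r_1,\mathbf s$ are uniformly random and Bob receives $\lvert\Psi^{\mathbf s}_{\mathbf r_0\mathbf r_1}\rangle$; the measurements on $B_i$ may depend on $\mathbf s$ and on the outcome $b'$ of the measurement on $B'$. $\oplus$ is addition modulo 2. *)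

theory Defs
  imports Complex_Main "Jordan_Normal_Form.Schur_Decomposition"
begin

text \<open>Finite-dimensional quantum mechanics with Jordan_Normal_Form matrices over complex.
  Tensor products are Kronecker products; the first factor is the most significant index.\<close>

definition kron_vec :: "complex vec \<Rightarrow> complex vec \<Rightarrow> complex vec" where
  "kron_vec v w = vec (dim_vec v * dim_vec w)
      (\<lambda>i. v $ (i div dim_vec w) * w $ (i mod dim_vec w))"

definition kron_mat :: "complex mat \<Rightarrow> complex mat \<Rightarrow> complex mat" where
  "kron_mat A B = mat (dim_row A * dim_row B) (dim_col A * dim_col B)
      (\<lambda>(i, j). A $$ (i div dim_row B, j div dim_col B) * B $$ (i mod dim_row B, j mod dim_col B))"

text \<open>Computational basis states |0>, |1> and Hadamard states |hat a> of one qubit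
  (bits encoded as bool, False = 0, True = 1).\<close>

definition ket :: "bool \<Rightarrow> complex vec" where
  "ket b = unit_vec 2 (if b then 1 else 0)"

definition ket_hat :: "bool \<Rightarrow> complex vec" where
  "ket_hat a = vec 2 (\<lambda>i. (if i = 0 then 1 else (if a then -1 else 1)) / complex_of_real (sqrt 2))"

text \<open>Two-qubit state on A0 A1 (A0 is the first tensor factor):
  |r0> on A_s and |hat r1> on A_{not s}.\<close>

definition psi :: "bool \<Rightarrow> bool \<Rightarrow> bool \<Rightarrow> complex vec" where
  "psi s r0 r1 = (if s then kron_vec (ket_hat r1) (ket r0) else kron_vec (ket r0) (ket_hat r1))"

fun kron_vec_list :: "complex vec list \<Rightarrow> complex vec" where
  "kron_vec_list [] = vec 1 (\<lambda>_. 1)"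
| "kron_vec_list (v # vs) = kron_vec v (kron_vec_list vs)"

text \<open>The 2n-qubit state on A = A_0^1 A_1^1 ... A_0^n A_1^n; bit strings are bool lists of length n.\<close>

definition Psi :: "nat \<Rightarrow> bool list \<Rightarrow> bool list \<Rightarrow> bool list \<Rightarrow> complex vec" where
  "Psi n s r0 r1 = kron_vec_list (map (\<lambda>j. psi (s ! j) (r0 ! j) (r1 ! j)) [0..<n])"

definition bitstrings :: "nat \<Rightarrow> bool list set" where
  "bitstrings n = {xs. length xs = n}"

definition cinner :: "complex vec \<Rightarrow> complex vec \<Rightarrow> complex" where
  "cinner v w = (\<Sum>i<dim_vec v. cnj (v $ i) * w $ i)"

definition unitary :: "nat \<Rightarrow> complex mat \<Rightarrow> bool" where
  "unitary d U \<longleftrightarrow> U \<in> carrier_mat d d \<and> mat_adjoint U * U = 1\<^sub>m d \<and> U * mat_adjoint U = 1\<^sub>m d"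

definition projective_measurement :: "nat \<Rightarrow> 'o set \<Rightarrow> ('o \<Rightarrow> complex mat) \<Rightarrow> bool" where
  "projective_measurement d I P \<longleftrightarrow> finite I \<and>
     (\<forall>x\<in>I. P x \<in> carrier_mat d d \<and> mat_adjoint (P x) = P x \<and> P x * P x = P x) \<and>
     (\<forall>i<d. \<forall>j<d. (\<Sum>x\<in>I. P x $$ (i, j)) = 1\<^sub>m d $$ (i, j))"

text \<open>Cheating strategy: ancilla dimension dE, pure state chi, unitary U on AE (dimension 4^n * dE),
  identified with B0 B1 B' of dimensions d0, d1, d', measurement R on B', measurements
  Proj i s b' on B_i with outcomes in bitstrings n.\<close>

definition strategy ::
  "nat \<Rightarrow> nat \<Rightarrow> complex vec \<Rightarrow> complex mat \<Rightarrow> nat \<Rightarrow> nat \<Rightarrow> nat \<Rightarrow>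
   (bool \<Rightarrow> complex mat) \<Rightarrow> (bool \<Rightarrow> bool list \<Rightarrow> bool \<Rightarrow> bool list \<Rightarrow> complex mat) \<Rightarrow> bool" where
  "strategy n dE chi U d0 d1 d' R Proj \<longleftrightarrow>
     chi \<in> carrier_vec dE \<and> cinner chi chi = 1 \<and>
     d0 * d1 * d' = 4 ^ n * dE \<and>
     unitary (4 ^ n * dE) U \<and>
     projective_measurement d' UNIV R \<and>
     (\<forall>i s b'. s \<in> bitstrings n \<longrightarrow>
        projective_measurement (if i then d1 else d0) (bitstrings n) (Proj i s b'))"

definition Phi :: "nat \<Rightarrow> complex vec \<Rightarrow> complex mat \<Rightarrow> bool list \<Rightarrow> bool list \<Rightarrow> bool list \<Rightarrow> complex vec" where
  "Phi n chi U s r0 r1 = U *\<^sub>v kron_vec (Psi n s r0 r1) chi"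

definition success_prob ::
  "nat \<Rightarrow> complex vec \<Rightarrow> complex mat \<Rightarrow>
   (bool \<Rightarrow> complex mat) \<Rightarrow> (bool \<Rightarrow> bool list \<Rightarrow> bool \<Rightarrow> bool list \<Rightarrow> complex mat) \<Rightarrow> complex" where
  "success_prob n chi U R Proj =
     (1 / 2 ^ (3 * n)) *
     (\<Sum>r0\<in>bitstrings n. \<Sum>r1\<in>bitstrings n. \<Sum>s\<in>bitstrings n. \<Sum>b'\<in>(UNIV :: bool set).
        let rb = (if b' then r1 else r0); rnb = (if b' then r0 else r1);
            \<Phi> = Phi n chi U s r0 r1
        in cinner \<Phi> (kron_mat (kron_mat (Proj False s b' rb) (Proj True s b' rnb)) (R b') *\<^sub>v \<Phi>))"

end

theory Submission
  imports Defs
begin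

definition nrm2 :: "complex vec \<Rightarrow> real" where
  "nrm2 v = (\<Sum>i<dim_vec v. (cmod (v$i))^2)"

lemma nrm2_nonneg: "nrm2 v \<ge> 0" unfolding nrm2_def by (simp add: sum_nonneg)

lemma mult_vec_idx:
  "A \<in> carrier_mat m k \<Longrightarrow> dim_vec v = k \<Longrightarrow> i < m \<Longrightarrow> (A *\<^sub>v v) $ i = (\<Sum>j<k. A$$(i,j) * v$j)"
  by (auto simp: scalar_prod_def lessThan_atLeast0 intro!: sum.cong)

lemma mult_vec_dim[simp]: "dim_vec (A *\<^sub>v v) = dim_row A" by simp

lemma adj_carrier: "A \<in> carrier_mat m k \<Longrightarrow> mat_adjoint A \<in> carrier_mat k m"
  unfolding mat_adjoint_def by auto

lemma adj_idx: "A \<in> carrier_mat m k \<Longrightarrow> i<k \<Longrightarrow> j<m \<Longrightarrow> mat_adjoint A $$ (i,j) = cnj (A$$(j,i))"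
  unfolding mat_adjoint_def by (auto simp: mat_of_rows_index)

lemma cinner_adj:
  assumes A: "A \<in> carrier_mat m k" and v: "dim_vec v = k" and w: "dim_vec w = m"
  shows "cinner (A *\<^sub>v v) w = cinner v (mat_adjoint A *\<^sub>v w)"
proof -
  have "cinner (A *\<^sub>v v) w = (\<Sum>i<m. cnj (\<Sum>j<k. A$$(i,j) * v$j) * w$i)"
    unfolding cinner_def using A by (intro sum.cong) (auto simp: mult_vec_idx[OF A v] simp del: index_mult_mat_vec)
  also have "\<dots> = (\<Sum>i<m. \<Sum>j<k. cnj (v$j) * (cnj (A$$(i,j)) * w$i))"
    by (simp add: sum_distrib_right sum_distrib_left mult_ac)
  also have "\<dots> = (\<Sum>j<k. \<Sum>i<m. cnj (v$j) * (cnj (A$$(i,j)) * w$i))"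
    by (rule sum.swap)
  also have "\<dots> = (\<Sum>j<k. cnj (v$j) * (\<Sum>i<m. mat_adjoint A $$ (j,i) * w$i))"
    using A by (auto simp: sum_distrib_left adj_idx intro!: sum.cong)
  also have "\<dots> = cinner v (mat_adjoint A *\<^sub>v w)"
    unfolding cinner_def using A v w adj_carrier[OF A]
    by (intro sum.cong) (auto simp: mult_vec_idx[OF adj_carrier[OF A] w] simp del: index_mult_mat_vec)
  finally show ?thesis .
qed

lemma cinner_self: "cinner v v = of_real (nrm2 v)"
  unfolding cinner_def nrm2_def
  by (simp add: complex_norm_square[symmetric] mult.commute)

lemma cinner_swap: "dim_vec v = dim_vec w \<Longrightarrow> cinner w v = cnj (cinner v w)"
  unfolding cinner_def by (simp add: mult.commute)

lemma cs_real:
  fixes a b :: "'i \<Rightarrow> real"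
  shows "(\<Sum>i\<in>I. a i * b i)^2 \<le> (\<Sum>i\<in>I. (a i)^2) * (\<Sum>i\<in>I. (b i)^2)"
proof (cases "finite I")
  case True
  have "0 \<le> (\<Sum>i\<in>I. \<Sum>j\<in>I. (a i * b j - a j * b i)^2)" by (simp add: sum_nonneg)
  also have "\<dots> = (\<Sum>i\<in>I. \<Sum>j\<in>I. (a i)^2 * (b j)^2 + (a j)^2 * (b i)^2 - 2 * ((a i * b i) * (a j * b j)))"
    by (simp add: power2_eq_square algebra_simps)
  also have "\<dots> = (\<Sum>i\<in>I. \<Sum>j\<in>I. (a i)^2 * (b j)^2) + (\<Sum>i\<in>I. \<Sum>j\<in>I. (b i)^2 * (a j)^2)
      - 2 * (\<Sum>i\<in>I. \<Sum>j\<in>I. (a i * b i) * (a j * b j))"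
    by (simp add: sum_subtractf sum.distrib sum_distrib_left mult.commute)
  also have "\<dots> = 2 * ((\<Sum>i\<in>I. (a i)^2) * (\<Sum>i\<in>I. (b i)^2)) - 2 * (\<Sum>i\<in>I. a i * b i)^2"
    unfolding sum_product[symmetric] power2_eq_square[of "sum _ _"] by simp
  finally show ?thesis by simp
qed simp

lemma cs_sqrt:
  fixes a b :: "'i \<Rightarrow> real"
  shows "(\<Sum>i\<in>I. a i * b i) \<le> sqrt (\<Sum>i\<in>I. (a i)^2) * sqrt (\<Sum>i\<in>I. (b i)^2)"
proof -
  have "(\<Sum>i\<in>I. a i * b i) \<le> \<bar>\<Sum>i\<in>I. a i * b i\<bar>" by simp
  also have "\<dots> = sqrt ((\<Sum>i\<in>I. a i * b i)^2)" by simp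
  also have "\<dots> \<le> sqrt ((\<Sum>i\<in>I. (a i)^2) * (\<Sum>i\<in>I. (b i)^2))"
    using cs_real real_sqrt_le_mono by blast
  also have "\<dots> = sqrt (\<Sum>i\<in>I. (a i)^2) * sqrt (\<Sum>i\<in>I. (b i)^2)" by (simp add: real_sqrt_mult)
  finally show ?thesis .
qed

lemma cmod_sum_prod_le:
  fixes a b :: "'i \<Rightarrow> complex"
  shows "cmod (\<Sum>i\<in>I. cnj (a i) * b i) \<le> sqrt (\<Sum>i\<in>I. (cmod (a i))^2) * sqrt (\<Sum>i\<in>I. (cmod (b i))^2)"
proof -
  have "cmod (\<Sum>i\<in>I. cnj (a i) * b i) \<le> (\<Sum>i\<in>I. cmod (a i) * cmod (b i))"
    by (rule order_trans[OF norm_sum]) (simp add: norm_mult)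
  also have "\<dots> \<le> sqrt (\<Sum>i\<in>I. (cmod (a i))^2) * sqrt (\<Sum>i\<in>I. (cmod (b i))^2)" by (rule cs_sqrt)
  finally show ?thesis .
qed

lemma cinner_cs: "dim_vec v = dim_vec w \<Longrightarrow> cmod (cinner v w) \<le> sqrt (nrm2 v) * sqrt (nrm2 w)"
  unfolding cinner_def nrm2_def by (simp add: cmod_sum_prod_le)

definition hproj :: "nat \<Rightarrow> complex mat \<Rightarrow> bool" where
  "hproj D P \<longleftrightarrow> P \<in> carrier_mat D D \<and> mat_adjoint P = P \<and> P * P = P"

lemma hproj_inner: "hproj D P \<Longrightarrow> dim_vec v = D \<Longrightarrow> dim_vec w = D \<Longrightarrow>
   cinner (P *\<^sub>v v) w = cinner v (P *\<^sub>v w)"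
  unfolding hproj_def using cinner_adj by metis

lemma hproj_idem_vec: "hproj D P \<Longrightarrow> dim_vec v = D \<Longrightarrow> P *\<^sub>v (P *\<^sub>v v) = P *\<^sub>v v"
  unfolding hproj_def by (metis assoc_mult_mat_vec carrier_vecI)

lemma hproj_sq: "hproj D P \<Longrightarrow> dim_vec v = D \<Longrightarrow> cinner (P *\<^sub>v v) (P *\<^sub>v v) = cinner v (P *\<^sub>v v)"
  using hproj_inner hproj_idem_vec by (metis hproj_def carrier_matD(1) mult_vec_dim)

lemma sum_split_prod: "(\<Sum>l<(a::nat)*b. f l) = (\<Sum>i<a. \<Sum>j<b. f (i*b+j))"
proof -
  have "(\<Sum>l<a*b. f l) = (\<Sum>i<a. sum f {i*b..<i*b+b})"
    using sum.nat_group[of f b a] by simp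
  also have "\<dots> = (\<Sum>i<a. \<Sum>j<b. f (i*b+j))"
  proof (rule sum.cong[OF refl])
    fix i
    have "sum f {i*b..<i*b+b} = sum (f \<circ> plus (i*b)) {0..<b}"
      using sum.atLeastLessThan_shift_0[of f "i*b" "i*b+b"] by simp
    then show "sum f {i*b..<i*b+b} = (\<Sum>j<b. f (i*b+j))" by (simp add: lessThan_atLeast0)
  qed
  finally show ?thesis .
qed

lemma divmod_lt1[simp]: "j < b \<Longrightarrow> (i*b+j) div b = (i::nat)"
  by (simp add: add.commute[of "i*b"])
lemma divmod_lt2[simp]: "j < b \<Longrightarrow> (i*b+j) mod b = (j::nat)"
  by (simp add: add.commute[of "i*b"])

lemma lt_mult_split: "i < a \<Longrightarrow> j < (b::nat) \<Longrightarrow> i*b+j < a*b"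
proof -
  assume "i<a" "j<b"
  then have "i*b+j < i*b+b" by simp
  also have "\<dots> = (Suc i)*b" by simp
  also have "\<dots> \<le> a*b" using \<open>i<a\<close> by (intro mult_le_mono1) simp
  finally show ?thesis .
qed

lemma div_lt_mult: "l < a*(b::nat) \<Longrightarrow> l div b < a"
  by (simp add: less_mult_imp_div_less)

lemma mod_lt_mult: "l < a*(b::nat) \<Longrightarrow> l mod b < b"
  by (cases "b = 0") auto

lemma divmod_eq_iff: "(i div (b::nat) = j div b \<and> i mod b = j mod b) \<longleftrightarrow> i = j"
  by (metis div_mult_mod_eq)

lemma kron_vec_dim[simp]: "dim_vec (kron_vec v w) = dim_vec v * dim_vec w"
  unfolding kron_vec_def by simp

lemma kron_vec_idx: "l < dim_vec v * dim_vec w \<Longrightarrow>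
    kron_vec v w $ l = v $ (l div dim_vec w) * w $ (l mod dim_vec w)"
  unfolding kron_vec_def by simp

lemma cinner_kron:
  assumes "dim_vec v' = dim_vec v" "dim_vec w' = dim_vec w"
  shows "cinner (kron_vec v w) (kron_vec v' w') = cinner v v' * cinner w w'"
proof -
  have "cinner (kron_vec v w) (kron_vec v' w') =
     (\<Sum>l<dim_vec v * dim_vec w. cnj (kron_vec v w $ l) * kron_vec v' w' $ l)"
    unfolding cinner_def by simp
  also have "\<dots> = (\<Sum>i<dim_vec v. \<Sum>j<dim_vec w. cnj (v$i * w$j) * (v'$i * w'$j))"
    unfolding sum_split_prod using assms
    by (intro sum.cong refl) (simp add: kron_vec_idx lt_mult_split)
  also have "\<dots> = cinner v v' * cinner w w'"
    unfolding cinner_def using assms by (simp add: sum_product mult_ac)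
  finally show ?thesis .
qed

lemma kron_mat_dims[simp]: "dim_row (kron_mat A B) = dim_row A * dim_row B"
   "dim_col (kron_mat A B) = dim_col A * dim_col B"
  unfolding kron_mat_def by auto

lemma kron_mat_carrier: "A \<in> carrier_mat a1 a2 \<Longrightarrow> B \<in> carrier_mat b1 b2 \<Longrightarrow>
   kron_mat A B \<in> carrier_mat (a1*b1) (a2*b2)"
  by auto

lemma kron_mat_idx: "i < dim_row A * dim_row B \<Longrightarrow> j < dim_col A * dim_col B \<Longrightarrow>
   kron_mat A B $$ (i,j) = A $$ (i div dim_row B, j div dim_col B) * B $$ (i mod dim_row B, j mod dim_col B)"
  unfolding kron_mat_def by simp

lemma kron_mult:
  assumes A: "A \<in> carrier_mat m k" and C: "C \<in> carrier_mat k p"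
    and B: "B \<in> carrier_mat m' k'" and D: "D \<in> carrier_mat k' p'"
  shows "kron_mat A B * kron_mat C D = kron_mat (A*C) (B*D)"
proof (rule eq_matI)
  fix i j assume i: "i < dim_row (kron_mat (A*C) (B*D))" and j: "j < dim_col (kron_mat (A*C) (B*D))"
  have i': "i < m*m'" and j': "j < p*p'" using i j A B C D by auto
  have "(kron_mat A B * kron_mat C D) $$ (i,j) = (\<Sum>l<k*k'. kron_mat A B $$ (i,l) * kron_mat C D $$ (l,j))"
    using i' j' A B C D by (simp add: scalar_prod_def lessThan_atLeast0)
  also have "\<dots> = (\<Sum>a<k. \<Sum>b<k'. (A $$ (i div m', a) * C $$ (a, j div p')) * (B $$ (i mod m', b) * D $$ (b, j mod p')))"
    unfolding sum_split_prod using i' j' A B C D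
    by (intro sum.cong refl) (simp add: kron_mat_idx lt_mult_split)
  also have "\<dots> = (A*C) $$ (i div m', j div p') * (B*D) $$ (i mod m', j mod p')"
    using i' j' A B C D div_lt_mult[OF i'] div_lt_mult[OF j'] mod_lt_mult[OF i'] mod_lt_mult[OF j']
    by (simp add: scalar_prod_def lessThan_atLeast0 sum_product)
  also have "\<dots> = kron_mat (A*C) (B*D) $$ (i,j)"
    using i' j' A B C D by (simp add: kron_mat_idx)
  finally show "(kron_mat A B * kron_mat C D) $$ (i,j) = kron_mat (A*C) (B*D) $$ (i,j)" .
qed (use A B C D in auto)

lemma kron_adj:
  assumes A: "A \<in> carrier_mat a1 a2" and B: "B \<in> carrier_mat b1 b2"
  shows "mat_adjoint (kron_mat A B) = kron_mat (mat_adjoint A) (mat_adjoint B)"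
proof (rule eq_matI)
  note AB = kron_mat_carrier[OF A B]
  fix i j assume i: "i < dim_row (kron_mat (mat_adjoint A) (mat_adjoint B))"
    and j: "j < dim_col (kron_mat (mat_adjoint A) (mat_adjoint B))"
  have i': "i < a2*b2" and j': "j < a1*b1" using i j adj_carrier[OF A] adj_carrier[OF B] by auto
  show "mat_adjoint (kron_mat A B) $$ (i,j) = kron_mat (mat_adjoint A) (mat_adjoint B) $$ (i,j)"
    using i' j' A B adj_carrier[OF A] adj_carrier[OF B]
      div_lt_mult[OF i'] div_lt_mult[OF j'] mod_lt_mult[OF i'] mod_lt_mult[OF j']
    by (simp add: adj_idx[OF AB] kron_mat_idx adj_idx[OF A] adj_idx[OF B])
qed (use adj_carrier[OF A] adj_carrier[OF B] adj_carrier[OF kron_mat_carrier[OF A B]] in auto)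

lemma kron_one: "kron_mat (1\<^sub>m a) (1\<^sub>m b) = 1\<^sub>m (a*b)"
proof (rule eq_matI)
  fix i j assume "i < dim_row (1\<^sub>m (a*b))" "j < dim_col (1\<^sub>m (a*b))"
  then have i': "i < a*b" and j': "j < a*b" by auto
  show "kron_mat (1\<^sub>m a) (1\<^sub>m b) $$ (i,j) = 1\<^sub>m (a*b) $$ (i,j)"
    using i' j' div_lt_mult[OF i'] div_lt_mult[OF j'] mod_lt_mult[OF i'] mod_lt_mult[OF j']
      divmod_eq_iff[of i b j]
    by (auto simp: kron_mat_idx)
qed auto

lemma hproj_kron: "hproj a A \<Longrightarrow> hproj b B \<Longrightarrow> hproj (a*b) (kron_mat A B)"
  unfolding hproj_def using kron_mult[of A a a A a B b b B b] kron_adj[of A a a B b b]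
  by (auto intro: kron_mat_carrier)

lemma hproj_one: "hproj a (1\<^sub>m a)"
proof -
  have "mat_adjoint (1\<^sub>m a) = (1\<^sub>m a :: complex mat)"
  proof (rule eq_matI)
    fix i j assume "i < dim_row (1\<^sub>m a)" "j < dim_col (1\<^sub>m a)"
    then show "mat_adjoint (1\<^sub>m a :: complex mat) $$ (i, j) = (1\<^sub>m a :: complex mat) $$ (i, j)"
      using adj_idx[of "1\<^sub>m a :: complex mat" a a i j] by auto
  qed (use adj_carrier[of "1\<^sub>m a :: complex mat" a a] in auto)
  then show ?thesis unfolding hproj_def by simp
qed

definition XX :: "nat \<Rightarrow> nat \<Rightarrow> complex mat \<Rightarrow> complex mat" where
  "XX d1 d' A = kron_mat (kron_mat A (1\<^sub>m d1)) (1\<^sub>m d')"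
definition YY :: "nat \<Rightarrow> nat \<Rightarrow> complex mat \<Rightarrow> complex mat" where
  "YY d0 d' B = kron_mat (kron_mat (1\<^sub>m d0) B) (1\<^sub>m d')"
definition RR :: "nat \<Rightarrow> nat \<Rightarrow> complex mat \<Rightarrow> complex mat" where
  "RR d0 d1 C = kron_mat (kron_mat (1\<^sub>m d0) (1\<^sub>m d1)) C"

lemma XX_Z: "A \<in> carrier_mat d0 d0 \<Longrightarrow> A' \<in> carrier_mat d0 d0 \<Longrightarrow> B \<in> carrier_mat d1 d1
  \<Longrightarrow> C \<in> carrier_mat d' d' \<Longrightarrow>
  XX d1 d' A * kron_mat (kron_mat A' B) C = kron_mat (kron_mat (A*A') B) C"
  unfolding XX_def
  by (subst kron_mult[of _ "d0*d1" "d0*d1" _ "d0*d1" _ d' d' _ d'], auto intro!: kron_mat_carrier simp: kron_mult[of _ d0 d0 _ d0 _ d1 d1 _ d1])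

lemma YY_Z: "A \<in> carrier_mat d0 d0 \<Longrightarrow> B' \<in> carrier_mat d1 d1 \<Longrightarrow> B \<in> carrier_mat d1 d1
  \<Longrightarrow> C \<in> carrier_mat d' d' \<Longrightarrow>
  YY d0 d' B' * kron_mat (kron_mat A B) C = kron_mat (kron_mat A (B'*B)) C"
  unfolding YY_def
  by (subst kron_mult[of _ "d0*d1" "d0*d1" _ "d0*d1" _ d' d' _ d'], auto intro!: kron_mat_carrier simp: kron_mult[of _ d0 d0 _ d0 _ d1 d1 _ d1])

lemma RR_Z: "A \<in> carrier_mat d0 d0 \<Longrightarrow> B \<in> carrier_mat d1 d1 \<Longrightarrow> C' \<in> carrier_mat d' d'
  \<Longrightarrow> C \<in> carrier_mat d' d' \<Longrightarrow>
  RR d0 d1 C' * kron_mat (kron_mat A B) C = kron_mat (kron_mat A B) (C'*C)"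
  unfolding RR_def
  by (subst kron_mult[of _ "d0*d1" "d0*d1" _ "d0*d1" _ d' d' _ d'], auto intro!: kron_mat_carrier simp: kron_mult[of _ d0 d0 _ d0 _ d1 d1 _ d1])

lemma XX_YY: "A \<in> carrier_mat d0 d0 \<Longrightarrow> B \<in> carrier_mat d1 d1 \<Longrightarrow>
  XX d1 d' A * YY d0 d' B = kron_mat (kron_mat A B) (1\<^sub>m d')"
  "A \<in> carrier_mat d0 d0 \<Longrightarrow> B \<in> carrier_mat d1 d1 \<Longrightarrow>
  YY d0 d' B * XX d1 d' A = kron_mat (kron_mat A B) (1\<^sub>m d')"
  unfolding XX_def YY_def
  by (subst kron_mult[of _ "d0*d1" "d0*d1" _ "d0*d1" _ d' d' _ d'], auto intro!: kron_mat_carrier simp: kron_mult[of _ d0 d0 _ d0 _ d1 d1 _ d1])+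

lemma RR_RR: "C \<in> carrier_mat d' d' \<Longrightarrow> C' \<in> carrier_mat d' d' \<Longrightarrow>
  RR d0 d1 C * RR d0 d1 C' = RR d0 d1 (C * C')"
  unfolding RR_def
  by (subst kron_mult[of _ "d0*d1" "d0*d1" _ "d0*d1" _ d' d' _ d'], auto intro!: kron_mat_carrier simp: kron_one)

lemma XX_carrier: "A \<in> carrier_mat d0 d0 \<Longrightarrow> XX d1 d' A \<in> carrier_mat (d0*d1*d') (d0*d1*d')"
  unfolding XX_def by (auto intro!: kron_mat_carrier)
lemma YY_carrier: "B \<in> carrier_mat d1 d1 \<Longrightarrow> YY d0 d' B \<in> carrier_mat (d0*d1*d') (d0*d1*d')"
  unfolding YY_def by (auto intro!: kron_mat_carrier)
lemma RR_carrier: "C \<in> carrier_mat d' d' \<Longrightarrow> RR d0 d1 C \<in> carrier_mat (d0*d1*d') (d0*d1*d')"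
  unfolding RR_def by (auto intro!: kron_mat_carrier)

lemma XX_hproj: "hproj d0 A \<Longrightarrow> hproj (d0*d1*d') (XX d1 d' A)"
  unfolding XX_def by (intro hproj_kron hproj_one)
lemma YY_hproj: "hproj d1 B \<Longrightarrow> hproj (d0*d1*d') (YY d0 d' B)"
  unfolding YY_def by (intro hproj_kron hproj_one)
lemma RR_hproj: "hproj d' C \<Longrightarrow> hproj (d0*d1*d') (RR d0 d1 C)"
  unfolding RR_def by (intro hproj_kron hproj_one)

definition complete :: "nat \<Rightarrow> 'x set \<Rightarrow> ('x \<Rightarrow> complex mat) \<Rightarrow> bool" where
  "complete D I M \<longleftrightarrow> (\<forall>k<D. \<forall>l<D. (\<Sum>x\<in>I. M x $$ (k,l)) = 1\<^sub>m D $$ (k,l))"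

lemma complete_left:
  assumes c: "complete a I A" and car: "\<forall>x\<in>I. A x \<in> carrier_mat a a"
  shows "complete (a*b) I (\<lambda>x. kron_mat (A x) (1\<^sub>m b))"
  unfolding complete_def
proof (intro allI impI)
  fix k l assume k: "k < a*b" and l: "l < a*b"
  have "(\<Sum>x\<in>I. kron_mat (A x) (1\<^sub>m b) $$ (k,l)) =
     (\<Sum>x\<in>I. A x $$ (k div b, l div b)) * 1\<^sub>m b $$ (k mod b, l mod b)"
    unfolding sum_distrib_right using car k l by (intro sum.cong refl) (auto simp: kron_mat_idx)
  also have "\<dots> = 1\<^sub>m a $$ (k div b, l div b) * 1\<^sub>m b $$ (k mod b, l mod b)"
    using c div_lt_mult[OF k] div_lt_mult[OF l] unfolding complete_def by simp
  also have "\<dots> = kron_mat (1\<^sub>m a) (1\<^sub>m b) $$ (k,l)" using k l by (simp add: kron_mat_idx)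
  finally show "(\<Sum>x\<in>I. kron_mat (A x) (1\<^sub>m b) $$ (k,l)) = 1\<^sub>m (a*b) $$ (k,l)" by (simp add: kron_one)
qed

lemma complete_right:
  assumes c: "complete b I B" and car: "\<forall>x\<in>I. B x \<in> carrier_mat b b"
  shows "complete (a*b) I (\<lambda>x. kron_mat (1\<^sub>m a) (B x))"
  unfolding complete_def
proof (intro allI impI)
  fix k l assume k: "k < a*b" and l: "l < a*b"
  have "(\<Sum>x\<in>I. kron_mat (1\<^sub>m a) (B x) $$ (k,l)) =
     1\<^sub>m a $$ (k div b, l div b) * (\<Sum>x\<in>I. B x $$ (k mod b, l mod b))"
    unfolding sum_distrib_left using car k l by (intro sum.cong refl) (auto simp: kron_mat_idx)
  also have "\<dots> = 1\<^sub>m a $$ (k div b, l div b) * 1\<^sub>m b $$ (k mod b, l mod b)"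
    using c mod_lt_mult[OF k] mod_lt_mult[OF l] unfolding complete_def by simp
  also have "\<dots> = kron_mat (1\<^sub>m a) (1\<^sub>m b) $$ (k,l)" using k l by (simp add: kron_mat_idx)
  finally show "(\<Sum>x\<in>I. kron_mat (1\<^sub>m a) (B x) $$ (k,l)) = 1\<^sub>m (a*b) $$ (k,l)" by (simp add: kron_one)
qed

lemma complete_XX: "complete d0 I P \<Longrightarrow> \<forall>x\<in>I. P x \<in> carrier_mat d0 d0 \<Longrightarrow>
   complete (d0*d1*d') I (\<lambda>x. XX d1 d' (P x))"
  unfolding XX_def
  by (rule complete_left[OF complete_left]) (auto intro!: kron_mat_carrier)

lemma complete_YY: "complete d1 I P \<Longrightarrow> \<forall>x\<in>I. P x \<in> carrier_mat d1 d1 \<Longrightarrow>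
   complete (d0*d1*d') I (\<lambda>x. YY d0 d' (P x))"
  unfolding YY_def
  by (rule complete_left[OF complete_right]) (auto intro!: kron_mat_carrier)

lemma complete_RR: "complete d' I P \<Longrightarrow> \<forall>x\<in>I. P x \<in> carrier_mat d' d' \<Longrightarrow>
   complete (d0*d1*d') I (\<lambda>x. RR d0 d1 (P x))"
  unfolding RR_def using complete_right[of d' I P "d0*d1"] by (simp add: kron_one)

lemma complete_inner:
  assumes c: "complete D I M" and car: "\<forall>x\<in>I. M x \<in> carrier_mat D D" and v: "dim_vec v = D"
  shows "(\<Sum>x\<in>I. cinner v (M x *\<^sub>v v)) = cinner v v"
proof -
  have "(\<Sum>x\<in>I. cinner v (M x *\<^sub>v v)) = (\<Sum>x\<in>I. \<Sum>k<D. \<Sum>l<D. cnj (v$k) * (M x $$ (k,l) * v$l))"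
    unfolding cinner_def using car v
    by (intro sum.cong refl) (auto simp: mult_vec_idx[of _ D D] sum_distrib_left simp del: index_mult_mat_vec)
  also have "\<dots> = (\<Sum>k<D. \<Sum>l<D. cnj (v$k) * ((\<Sum>x\<in>I. M x $$ (k,l)) * v$l))"
    by (simp add: sum.swap[of _ I] sum_distrib_left sum_distrib_right)
  also have "\<dots> = (\<Sum>k<D. \<Sum>l<D. cnj (v$k) * (1\<^sub>m D $$ (k,l) * v$l))"
    using c unfolding complete_def by simp
  also have "\<dots> = (\<Sum>k<D. cnj (v$k) * v$k)"
  proof (intro sum.cong refl)
    fix k assume k: "k \<in> {..<D}"
    have "(\<Sum>l<D. cnj (v$k) * (1\<^sub>m D $$ (k,l) * v$l)) = (\<Sum>l<D. if l = k then cnj (v$k) * v$l else 0)"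
      using k by (intro sum.cong refl) auto
    also have "\<dots> = cnj (v$k) * v$k" using k by simp
    finally show "(\<Sum>l<D. cnj (v$k) * (1\<^sub>m D $$ (k,l) * v$l)) = cnj (v$k) * v$k" .
  qed
  also have "\<dots> = cinner v v" unfolding cinner_def using v by simp
  finally show ?thesis .
qed

lemma nrm2_hproj: "hproj D P \<Longrightarrow> dim_vec v = D \<Longrightarrow> nrm2 (P *\<^sub>v v) = Re (cinner v (P *\<^sub>v v))"
  using hproj_sq[of D P v] cinner_self[of "P *\<^sub>v v"] by (metis Re_complex_of_real)

lemma complete_nrm:
  assumes c: "complete D I M" and h: "\<forall>x\<in>I. hproj D (M x)" and v: "dim_vec v = D"
  shows "(\<Sum>x\<in>I. nrm2 (M x *\<^sub>v v)) = nrm2 v"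
proof -
  have "(\<Sum>x\<in>I. nrm2 (M x *\<^sub>v v)) = (\<Sum>x\<in>I. Re (cinner v (M x *\<^sub>v v)))"
    using h v nrm2_hproj by (intro sum.cong refl) blast
  also have "\<dots> = Re (\<Sum>x\<in>I. cinner v (M x *\<^sub>v v))" by (simp add: Re_sum)
  also have "\<dots> = nrm2 v" using complete_inner[OF c _ v] h unfolding hproj_def
    by (simp add: cinner_self)
  finally show ?thesis .
qed

lemma pm_complete: "projective_measurement d I P \<Longrightarrow> complete d I P"
  unfolding projective_measurement_def complete_def by auto

lemma pm_hproj: "projective_measurement d I P \<Longrightarrow> x \<in> I \<Longrightarrow> hproj d (P x)"
  unfolding projective_measurement_def hproj_def by auto

lemma pm_bool_orth:
  assumes pm: "projective_measurement d UNIV (R :: bool \<Rightarrow> complex mat)"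
  shows "R b * R (\<not> b) = 0\<^sub>m d d"
proof -
  have car: "R b \<in> carrier_mat d d" "R (\<not>b) \<in> carrier_mat d d"
    using pm unfolding projective_measurement_def by auto
  have idem: "R b * R b = R b" using pm unfolding projective_measurement_def by auto
  have "R (\<not> b) = 1\<^sub>m d - R b"
  proof (rule eq_matI)
    fix i j assume "i < dim_row (1\<^sub>m d - R b)" "j < dim_col (1\<^sub>m d - R b)"
    then have ij: "i < d" "j < d" using car by auto
    have "R False $$ (i,j) + R True $$ (i,j) = 1\<^sub>m d $$ (i,j)"
      using pm ij unfolding projective_measurement_def by (simp add: UNIV_bool del: index_one_mat)
    then show "R (\<not> b) $$ (i,j) = (1\<^sub>m d - R b) $$ (i,j)"
      using ij car by (cases b) (auto simp: algebra_simps)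
  qed (use car in auto)
  then have "R b * R (\<not> b) = R b * 1\<^sub>m d - R b * R b"
    using car mult_minus_distrib_mat[of "R b" d d "1\<^sub>m d" d "R b"] by simp
  also have "\<dots> = 0\<^sub>m d d" using car idem by simp
  finally show ?thesis .
qed

lemma hproj_prod_comm:
  assumes A: "hproj D A" and B: "hproj D B" and c: "A * B = B * A"
  shows "hproj D (A * B)"
proof -
  have car: "A \<in> carrier_mat D D" "B \<in> carrier_mat D D" using A B unfolding hproj_def by auto
  have adj: "mat_adjoint (A * B) = mat_adjoint B * mat_adjoint A"
  proof (rule eq_matI)
    fix i j assume "i < dim_row (mat_adjoint B * mat_adjoint A)" "j < dim_col (mat_adjoint B * mat_adjoint A)"
    then have ij: "i < D" "j < D" using adj_carrier[OF car(1)] adj_carrier[OF car(2)] by auto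
    have AB: "A * B \<in> carrier_mat D D" using car by simp
    show "mat_adjoint (A * B) $$ (i, j) = (mat_adjoint B * mat_adjoint A) $$ (i, j)"
      using ij car adj_carrier[OF car(1)] adj_carrier[OF car(2)]
      by (simp add: adj_idx[OF AB] adj_idx[OF car(1)] adj_idx[OF car(2)] scalar_prod_def
          sum_conjugate[symmetric, simplified] mult.commute)
  qed (use car adj_carrier[OF car(1)] adj_carrier[OF car(2)] adj_carrier[of "A*B" D D] in auto)
  have AB: "A * B \<in> carrier_mat D D" "B * A \<in> carrier_mat D D" "A * A \<in> carrier_mat D D" using car by auto
  have "A * B * (A * B) = A * (B * (A * B))" using assoc_mult_mat[OF car(1) car(2) AB(1)] .
  also have "B * (A * B) = (B * A) * B" using assoc_mult_mat[OF car(2) car(1) car(2)] by simp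
  also have "\<dots> = (A * B) * B" using c by simp
  also have "\<dots> = A * (B * B)" using assoc_mult_mat[OF car(1) car(2) car(2)] .
  also have "A * (A * (B * B)) = A * A * (B * B)" using assoc_mult_mat[OF car(1) car(1) mult_carrier_mat[OF car(2) car(2)]] by simp
  also have "\<dots> = A * B" using A B unfolding hproj_def by simp
  finally show ?thesis using adj A B c car unfolding hproj_def by auto
qed

definition bnd :: "'g set \<Rightarrow> 'h set \<Rightarrow> ('g \<Rightarrow> 'h \<Rightarrow> complex) \<Rightarrow> real \<Rightarrow> bool" where
  "bnd G H K \<kappa> \<longleftrightarrow> (\<forall>\<alpha> \<beta>. cmod (\<Sum>g\<in>G. \<Sum>h\<in>H. cnj (\<alpha> g) * K g h * \<beta> h)
      \<le> \<kappa> * sqrt (\<Sum>g\<in>G. (cmod (\<alpha> g))^2) * sqrt (\<Sum>h\<in>H. (cmod (\<beta> h))^2))"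

lemma sum_cmod_sq_eq: "(\<Sum>g\<in>G. cnj (z g) * z g) = complex_of_real (\<Sum>g\<in>G. (cmod (z g))^2)"
  by (simp add: complex_norm_square[symmetric] mult.commute)

lemma sum_prod_split: "sum f (A \<times> G) = (\<Sum>a\<in>A. \<Sum>g\<in>G. f (a,g))"
  by (simp add: sum.cartesian_product)

lemma op_bound:
  assumes b: "bnd G H K \<kappa>" and k: "\<kappa> \<ge> 0"
  shows "(\<Sum>g\<in>G. (cmod (\<Sum>h\<in>H. K g h * \<beta> h))^2) \<le> \<kappa>^2 * (\<Sum>h\<in>H. (cmod (\<beta> h))^2)"
proof -
  define z where "z g = (\<Sum>h\<in>H. K g h * \<beta> h)" for g
  define N where "N = (\<Sum>g\<in>G. (cmod (z g))^2)"
  define B where "B = (\<Sum>h\<in>H. (cmod (\<beta> h))^2)"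
  have N0: "N \<ge> 0" unfolding N_def by (simp add: sum_nonneg)
  have B0: "B \<ge> 0" unfolding B_def by (simp add: sum_nonneg)
  have "(\<Sum>g\<in>G. \<Sum>h\<in>H. cnj (z g) * K g h * \<beta> h) = (\<Sum>g\<in>G. cnj (z g) * z g)"
    unfolding z_def by (simp add: sum_distrib_left mult.assoc)
  also have "\<dots> = complex_of_real N" unfolding N_def by (rule sum_cmod_sq_eq)
  finally have e: "(\<Sum>g\<in>G. \<Sum>h\<in>H. cnj (z g) * K g h * \<beta> h) = complex_of_real N" .
  have "cmod (\<Sum>g\<in>G. \<Sum>h\<in>H. cnj (z g) * K g h * \<beta> h) \<le> \<kappa> * sqrt N * sqrt B"
    using b unfolding bnd_def N_def B_def by blast
  then have NB: "N \<le> \<kappa> * sqrt N * sqrt B" unfolding e using N0 by simp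
  have "N \<le> \<kappa>^2 * B"
  proof (cases "N = 0")
    case True then show ?thesis using k B0 by simp
  next
    case False
    then have sN: "sqrt N > 0" using N0 by simp
    have "sqrt N * sqrt N = N" using N0 by simp
    then have "sqrt N * sqrt N \<le> (\<kappa> * sqrt B) * sqrt N" using NB by (simp add: mult_ac)
    then have le: "sqrt N \<le> \<kappa> * sqrt B" using sN by (rule mult_right_le_imp_le)
    have "N = sqrt N * sqrt N" using N0 by simp
    also have "\<dots> \<le> (\<kappa> * sqrt B) * (\<kappa> * sqrt B)" using le sN k B0 by (intro mult_mono) auto
    also have "\<dots> = \<kappa>^2 * B" using B0 by (simp add: power2_eq_square mult_ac)
    finally show ?thesis .
  qed
  then show ?thesis unfolding N_def B_def z_def .
qed

lemma tensor_bnd: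
  fixes A :: "'a set" and B :: "'b set" and G :: "'g set" and H :: "'h set"
  assumes fin: "finite A" "finite B" "finite G" "finite H"
    and b1: "bnd A B k \<kappa>1" and b2: "bnd G H K \<kappa>2" and k1: "\<kappa>1 \<ge> 0" and k2: "\<kappa>2 \<ge> 0"
  shows "bnd (A \<times> G) (B \<times> H) (\<lambda>(a,g) (b,h). k a b * K g h) (\<kappa>1 * \<kappa>2)"
  unfolding bnd_def
proof (intro allI)
  fix \<alpha> :: "'a \<times> 'g \<Rightarrow> complex" and \<beta> :: "'b \<times> 'h \<Rightarrow> complex"
  define z where "z b g = (\<Sum>h\<in>H. K g h * \<beta> (b,h))" for b g
  define na where "na g = (\<Sum>a\<in>A. (cmod (\<alpha> (a,g)))^2)" for g
  define nz where "nz g = (\<Sum>b\<in>B. (cmod (z b g))^2)" for g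
  have na0: "na g \<ge> 0" for g unfolding na_def by (simp add: sum_nonneg)
  have nz0: "nz g \<ge> 0" for g unfolding nz_def by (simp add: sum_nonneg)
  have "(\<Sum>x\<in>A \<times> G. \<Sum>y\<in>B \<times> H. cnj (\<alpha> x) * (case x of (a,g) \<Rightarrow> \<lambda>(b,h). k a b * K g h) y * \<beta> y)
      = (\<Sum>a\<in>A. \<Sum>g\<in>G. \<Sum>b\<in>B. \<Sum>h\<in>H. cnj (\<alpha> (a,g)) * (k a b * K g h) * \<beta> (b,h))"
    by (simp only: sum_prod_split prod.case)
  also have "\<dots> = (\<Sum>g\<in>G. \<Sum>a\<in>A. \<Sum>b\<in>B. cnj (\<alpha> (a,g)) * k a b * z b g)"
  proof -
    have "(\<Sum>a\<in>A. \<Sum>g\<in>G. \<Sum>b\<in>B. \<Sum>h\<in>H. cnj (\<alpha> (a,g)) * (k a b * K g h) * \<beta> (b,h))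
       = (\<Sum>g\<in>G. \<Sum>a\<in>A. \<Sum>b\<in>B. \<Sum>h\<in>H. cnj (\<alpha> (a,g)) * (k a b * K g h) * \<beta> (b,h))"
      by (rule sum.swap)
    also have "\<dots> = (\<Sum>g\<in>G. \<Sum>a\<in>A. \<Sum>b\<in>B. cnj (\<alpha> (a,g)) * k a b * z b g)"
      unfolding z_def sum_distrib_left by (intro sum.cong refl) (simp only: mult.assoc)
    finally show ?thesis .
  qed
  finally have eq: "(\<Sum>x\<in>A \<times> G. \<Sum>y\<in>B \<times> H. cnj (\<alpha> x) * (case x of (a,g) \<Rightarrow> \<lambda>(b,h). k a b * K g h) y * \<beta> y)
      = (\<Sum>g\<in>G. \<Sum>a\<in>A. \<Sum>b\<in>B. cnj (\<alpha> (a,g)) * k a b * z b g)" .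
  have "cmod (\<Sum>g\<in>G. \<Sum>a\<in>A. \<Sum>b\<in>B. cnj (\<alpha> (a,g)) * k a b * z b g)
      \<le> (\<Sum>g\<in>G. cmod (\<Sum>a\<in>A. \<Sum>b\<in>B. cnj (\<alpha> (a,g)) * k a b * z b g))" by (rule norm_sum)
  also have "\<dots> \<le> (\<Sum>g\<in>G. \<kappa>1 * (sqrt (na g) * sqrt (nz g)))"
  proof (rule sum_mono)
    fix g assume "g \<in> G"
    show "cmod (\<Sum>a\<in>A. \<Sum>b\<in>B. cnj (\<alpha> (a,g)) * k a b * z b g) \<le> \<kappa>1 * (sqrt (na g) * sqrt (nz g))"
      using b1[unfolded bnd_def, rule_format, of "\<lambda>a. \<alpha> (a,g)" "\<lambda>b. z b g"]
      unfolding na_def nz_def by (simp only: mult.assoc)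
  qed
  also have "\<dots> = \<kappa>1 * (\<Sum>g\<in>G. sqrt (na g) * sqrt (nz g))" by (simp add: sum_distrib_left)
  also have "\<dots> \<le> \<kappa>1 * (sqrt (\<Sum>g\<in>G. (sqrt (na g))^2) * sqrt (\<Sum>g\<in>G. (sqrt (nz g))^2))"
    using k1 by (intro mult_left_mono cs_sqrt) auto
  also have "(\<Sum>g\<in>G. (sqrt (na g))^2) = (\<Sum>g\<in>G. na g)" using na0 by simp
  also have "(\<Sum>g\<in>G. (sqrt (nz g))^2) = (\<Sum>g\<in>G. nz g)" using nz0 by simp
  also have "(\<Sum>g\<in>G. na g) = (\<Sum>x\<in>A \<times> G. (cmod (\<alpha> x))^2)"
    unfolding na_def by (subst sum.swap) (simp only: sum_prod_split)
  also have "(\<Sum>g\<in>G. nz g) \<le> \<kappa>2^2 * (\<Sum>y\<in>B \<times> H. (cmod (\<beta> y))^2)"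
  proof -
    have "(\<Sum>g\<in>G. nz g) = (\<Sum>b\<in>B. \<Sum>g\<in>G. (cmod (z b g))^2)"
      unfolding nz_def by (rule sum.swap)
    also have "\<dots> \<le> (\<Sum>b\<in>B. \<kappa>2^2 * (\<Sum>h\<in>H. (cmod (\<beta> (b,h)))^2))"
      unfolding z_def by (intro sum_mono op_bound[OF b2 k2])
    also have "\<dots> = \<kappa>2^2 * (\<Sum>y\<in>B \<times> H. (cmod (\<beta> y))^2)"
      by (simp only: sum_distrib_left sum_prod_split)
    finally show ?thesis .
  qed
  then have "sqrt (\<Sum>g\<in>G. nz g) \<le> \<kappa>2 * sqrt (\<Sum>y\<in>B \<times> H. (cmod (\<beta> y))^2)"
  proof -
    have "sqrt (\<Sum>g\<in>G. nz g) \<le> sqrt (\<kappa>2^2 * (\<Sum>y\<in>B \<times> H. (cmod (\<beta> y))^2))"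
      using \<open>(\<Sum>g\<in>G. nz g) \<le> _\<close> by (rule real_sqrt_le_mono)
    also have "\<dots> = \<kappa>2 * sqrt (\<Sum>y\<in>B \<times> H. (cmod (\<beta> y))^2)"
      using k2 by (simp add: real_sqrt_mult)
    finally show ?thesis .
  qed
  then have "\<kappa>1 * (sqrt (\<Sum>x\<in>A \<times> G. (cmod (\<alpha> x))^2) * sqrt (\<Sum>g\<in>G. nz g))
     \<le> \<kappa>1 * (sqrt (\<Sum>x\<in>A \<times> G. (cmod (\<alpha> x))^2) * (\<kappa>2 * sqrt (\<Sum>y\<in>B \<times> H. (cmod (\<beta> y))^2)))"
    using k1 by (intro mult_left_mono) (auto simp: sum_nonneg)
  finally show "cmod (\<Sum>x\<in>A \<times> G. \<Sum>y\<in>B \<times> H. cnj (\<alpha> x) * (case x of (a,g) \<Rightarrow> \<lambda>(b,h). k a b * K g h) y * \<beta> y)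
      \<le> \<kappa>1 * \<kappa>2 * sqrt (\<Sum>x\<in>A \<times> G. (cmod (\<alpha> x))^2) * sqrt (\<Sum>y\<in>B \<times> H. (cmod (\<beta> y))^2)"
    unfolding eq by (simp add: mult_ac)
qed

lemma sum2: "(\<Sum>i<(2::nat). f i) = f 0 + f 1"
  by (simp add: numeral_2_eq_2)

lemma sqrt2_sq: "complex_of_real (sqrt 2) * complex_of_real (sqrt 2) = 2"
  by (simp flip: of_real_mult)

definition sg :: "bool \<Rightarrow> complex" where "sg b = (if b then -1 else 1)"

lemma ket_dim[simp]: "dim_vec (ket b) = 2" unfolding ket_def by simp
lemma ket_hat_dim[simp]: "dim_vec (ket_hat b) = 2" unfolding ket_hat_def by simp
lemma psi_dim[simp]: "dim_vec (psi a x y) = 4" unfolding psi_def by simp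

lemma ket_ket: "cinner (ket x) (ket y) = (if x = y then 1 else 0)"
  unfolding cinner_def ket_def by (cases x; cases y) (simp_all add: sum2)

lemma ket_hat_0: "ket_hat a $ 0 = 1 / complex_of_real (sqrt 2)"
  unfolding ket_hat_def by simp
lemma ket_hat_1: "ket_hat a $ 1 = sg a / complex_of_real (sqrt 2)"
  unfolding ket_hat_def sg_def by simp
lemma ket_hat_1': "ket_hat a $ Suc 0 = sg a / complex_of_real (sqrt 2)"
  using ket_hat_1 by simp
lemma sg_sq: "sg a * sg a = 1" unfolding sg_def by simp
lemma cnj_sg: "cnj (sg a) = sg a" unfolding sg_def by simp

lemma hat_hat: "cinner (ket_hat x) (ket_hat y) = (if x = y then 1 else 0)"
proof -
  have "cinner (ket_hat x) (ket_hat y) = (1 + sg x * sg y) / (complex_of_real (sqrt 2) * complex_of_real (sqrt 2))"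
    unfolding cinner_def by (simp add: sum2 ket_hat_0 ket_hat_1' cnj_sg add_divide_distrib)
  also have "\<dots> = (1 + sg x * sg y) / 2" by (simp only: sqrt2_sq)
  finally show ?thesis by (cases x; cases y) (simp_all add: sg_def)
qed

lemma ket_hat: "cinner (ket x) (ket_hat y) = sg (x \<and> y) / complex_of_real (sqrt 2)"
  unfolding cinner_def ket_def ket_hat_def sg_def
  by (cases x; cases y) (simp_all add: sum2)

lemma hat_ket: "cinner (ket_hat y) (ket x) = sg (x \<and> y) / complex_of_real (sqrt 2)"
  unfolding cinner_def ket_def ket_hat_def sg_def
  by (cases x; cases y) (simp_all add: sum2)

lemma psi_inner: "cinner (psi a x y) (psi a' x' y') =
   (if a = a' then (if x = x' \<and> y = y' then 1 else 0) else sg (x \<and> y') * sg (y \<and> x') / 2)"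
  unfolding psi_def
  by (cases a; cases a') (auto simp: cinner_kron ket_ket hat_hat ket_hat hat_ket sqrt2_sq
      field_simps sg_def)

lemma Psi_0: "Psi 0 s r0 r1 = vec 1 (\<lambda>_. 1)"
  unfolding Psi_def by simp

lemma upt_Suc_cons: "[0..<Suc n] = 0 # map Suc [0..<n]"
  by (simp only: upt_conv_Cons[of 0 "Suc n"] zero_less_Suc map_Suc_upt)

lemma Psi_Suc: "Psi (Suc n) (a#s) (x#r0) (y#r1) = kron_vec (psi a x y) (Psi n s r0 r1)"
  unfolding Psi_def upt_Suc_cons by (simp add: comp_def)

lemma Psi_dim_aux: "(\<And>j. dim_vec (F j) = 4) \<Longrightarrow> dim_vec (kron_vec_list (map F [0..<n])) = 4^n"
proof (induction n arbitrary: F)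
  case 0 then show ?case by simp
next
  case (Suc n)
  have "map F [0..<Suc n] = F 0 # map (F \<circ> Suc) [0..<n]"
    unfolding upt_Suc_cons by simp
  then show ?case using Suc.IH[of "F \<circ> Suc"] Suc.prems by (simp add: comp_def del: upt_Suc)
qed

lemma Psi_dim[simp]: "dim_vec (Psi n s r0 r1) = 4^n"
  unfolding Psi_def by (rule Psi_dim_aux) simp

lemma bs_Suc: "bitstrings (Suc n) = (\<lambda>(a,g). a#g) ` (UNIV \<times> bitstrings n)"
proof
  show "bitstrings (Suc n) \<subseteq> (\<lambda>(a,g). a#g) ` (UNIV \<times> bitstrings n)"
  proof
    fix xs assume "xs \<in> bitstrings (Suc n)"
    then obtain a g where "xs = a#g" "length g = n" unfolding bitstrings_def by (cases xs) auto
    then show "xs \<in> (\<lambda>(a,g). a#g) ` (UNIV \<times> bitstrings n)" unfolding bitstrings_def by force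
  qed
qed (auto simp: bitstrings_def)

lemma bs_0: "bitstrings 0 = {[]}" unfolding bitstrings_def by auto

lemma bs_finite[simp]: "finite (bitstrings n)"
  by (induction n) (simp_all add: bs_0 bs_Suc)

lemma bs_inj: "inj_on (\<lambda>(a,g). a#g) (UNIV \<times> bitstrings n)"
  by (auto simp: inj_on_def)

lemma sum_bs_Suc: "sum f (bitstrings (Suc n)) = (\<Sum>a\<in>UNIV. \<Sum>g\<in>bitstrings n. f (a#g))"
  unfolding bs_Suc by (simp add: sum.reindex[OF bs_inj] sum_prod_split)

lemma bnd_cong: "bnd G H K \<kappa> \<Longrightarrow> (\<And>g h. g \<in> G \<Longrightarrow> h \<in> H \<Longrightarrow> K g h = K' g h) \<Longrightarrow> bnd G H K' \<kappa>"
proof -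
  assume b: "bnd G H K \<kappa>" and e: "\<And>g h. g \<in> G \<Longrightarrow> h \<in> H \<Longrightarrow> K g h = K' g h"
  have "(\<Sum>g\<in>G. \<Sum>h\<in>H. cnj (\<alpha> g) * K g h * \<beta> h) = (\<Sum>g\<in>G. \<Sum>h\<in>H. cnj (\<alpha> g) * K' g h * \<beta> h)"
    for \<alpha> \<beta> using e by (intro sum.cong refl) auto
  then show ?thesis using b unfolding bnd_def by simp
qed

lemma bnd_cons:
  assumes "bnd (UNIV \<times> bitstrings n) (UNIV \<times> bitstrings n) (\<lambda>(a,g) (b,h). K (a#g) (b#h)) \<kappa>"
  shows "bnd (bitstrings (Suc n)) (bitstrings (Suc n)) K \<kappa>"
  unfolding bnd_def
proof (intro allI)
  fix \<alpha> \<beta> :: "bool list \<Rightarrow> complex"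
  have "cmod (\<Sum>x\<in>UNIV \<times> bitstrings n. \<Sum>y\<in>UNIV \<times> bitstrings n.
      cnj (\<alpha> (case x of (a,g) \<Rightarrow> a#g)) * (case x of (a,g) \<Rightarrow> \<lambda>(b,h). K (a#g) (b#h)) y * \<beta> (case y of (a,g) \<Rightarrow> a#g))
    \<le> \<kappa> * sqrt (\<Sum>x\<in>UNIV \<times> bitstrings n. (cmod (\<alpha> (case x of (a,g) \<Rightarrow> a#g)))^2)
        * sqrt (\<Sum>y\<in>UNIV \<times> bitstrings n. (cmod (\<beta> (case y of (a,g) \<Rightarrow> a#g)))^2)"
    using assms[unfolded bnd_def, rule_format, of "\<lambda>(a,g). \<alpha> (a#g)" "\<lambda>(a,g). \<beta> (a#g)"]
    by (simp add: case_prod_beta)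
  then show "cmod (\<Sum>g\<in>bitstrings (Suc n). \<Sum>h\<in>bitstrings (Suc n). cnj (\<alpha> g) * K g h * \<beta> h)
      \<le> \<kappa> * sqrt (\<Sum>g\<in>bitstrings (Suc n). (cmod (\<alpha> g))^2) * sqrt (\<Sum>h\<in>bitstrings (Suc n). (cmod (\<beta> h))^2)"
    unfolding sum_bs_Suc by (simp add: sum_prod_split)
qed

lemma sum_bool: "(\<Sum>b\<in>(UNIV::bool set). f b) = f False + f True"
  by (simp add: UNIV_bool)

lemma single_le_sqrt: "finite I \<Longrightarrow> i \<in> I \<Longrightarrow> cmod (\<alpha> i) \<le> sqrt (\<Sum>g\<in>I. (cmod (\<alpha> g))^2)"
proof -
  assume "finite I" "i \<in> I"
  then have "(cmod (\<alpha> i))^2 \<le> (\<Sum>g\<in>I. (cmod (\<alpha> g))^2)"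
    by (intro member_le_sum) auto
  then show ?thesis by (metis norm_ge_zero real_le_rsqrt)
qed

lemma bnd_delta: "bnd (UNIV::bool set) (UNIV::bool set) (\<lambda>g h. if g = g0 \<and> h = h0 then 1 else 0) 1"
  unfolding bnd_def
proof (intro allI)
  fix \<alpha> \<beta> :: "bool \<Rightarrow> complex"
  have "(\<Sum>g\<in>UNIV. \<Sum>h\<in>UNIV. cnj (\<alpha> g) * (if g = g0 \<and> h = h0 then 1 else 0) * \<beta> h) = cnj (\<alpha> g0) * \<beta> h0"
    by (cases g0; cases h0) (simp_all add: sum_bool)
  moreover have "cmod (cnj (\<alpha> g0) * \<beta> h0) \<le> sqrt (\<Sum>g\<in>UNIV. (cmod (\<alpha> g))^2) * sqrt (\<Sum>h\<in>UNIV. (cmod (\<beta> h))^2)"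
    unfolding norm_mult complex_mod_cnj
    by (intro mult_mono single_le_sqrt) (auto simp: sum_nonneg)
  ultimately show "cmod (\<Sum>g\<in>UNIV. \<Sum>h\<in>UNIV. cnj (\<alpha> g) * (if g = g0 \<and> h = h0 then 1 else 0) * \<beta> h)
    \<le> 1 * sqrt (\<Sum>g\<in>UNIV. (cmod (\<alpha> g))^2) * sqrt (\<Sum>h\<in>UNIV. (cmod (\<beta> h))^2)" by simp
qed

lemma parallelogram: "(cmod (a+b))^2 + (cmod (a-b))^2 = 2 * ((cmod a)^2 + (cmod b)^2)"
  unfolding cmod_power2 by (simp add: power2_eq_square algebra_simps)

lemma bnd_had:
  assumes s0: "cmod \<sigma>0 = 1"
  shows "bnd (UNIV::bool set) (UNIV::bool set) (\<lambda>g h. \<sigma>0 * sg (g \<and> h) / 2) (1 / sqrt 2)"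
  unfolding bnd_def
proof (intro allI)
  fix \<alpha> \<beta> :: "bool \<Rightarrow> complex"
  define w where "w g = (if g then \<beta> False - \<beta> True else \<beta> False + \<beta> True)" for g
  have eq: "(\<Sum>g\<in>UNIV. \<Sum>h\<in>UNIV. cnj (\<alpha> g) * (\<sigma>0 * sg (g \<and> h) / 2) * \<beta> h)
      = \<sigma>0 / 2 * (\<Sum>g\<in>UNIV. cnj (\<alpha> g) * w g)"
    unfolding w_def by (simp add: sum_bool sg_def algebra_simps)
  have "cmod (\<Sum>g\<in>UNIV. \<Sum>h\<in>UNIV. cnj (\<alpha> g) * (\<sigma>0 * sg (g \<and> h) / 2) * \<beta> h)
      = 1/2 * cmod (\<Sum>g\<in>UNIV. cnj (\<alpha> g) * w g)"
    unfolding eq norm_mult norm_divide s0 by simp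
  also have "\<dots> \<le> 1/2 * (sqrt (\<Sum>g\<in>UNIV. (cmod (\<alpha> g))^2) * sqrt (\<Sum>g\<in>UNIV. (cmod (w g))^2))"
    by (intro mult_left_mono cmod_sum_prod_le) auto
  also have "(\<Sum>g\<in>UNIV. (cmod (w g))^2) = 2 * (\<Sum>h\<in>UNIV. (cmod (\<beta> h))^2)"
    unfolding w_def using parallelogram[of "\<beta> False" "\<beta> True"] by (simp add: sum_bool add.commute)
  also have "1/2 * (sqrt (\<Sum>g\<in>UNIV. (cmod (\<alpha> g))^2) * sqrt (2 * (\<Sum>h\<in>UNIV. (cmod (\<beta> h))^2)))
     = 1 / sqrt 2 * sqrt (\<Sum>g\<in>UNIV. (cmod (\<alpha> g))^2) * sqrt (\<Sum>h\<in>UNIV. (cmod (\<beta> h))^2)"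
    by (simp add: real_sqrt_mult field_simps)
  finally show "cmod (\<Sum>g\<in>UNIV. \<Sum>h\<in>UNIV. cnj (\<alpha> g) * (\<sigma>0 * sg (g \<and> h) / 2) * \<beta> h)
      \<le> 1 / sqrt 2 * sqrt (\<Sum>g\<in>UNIV. (cmod (\<alpha> g))^2) * sqrt (\<Sum>h\<in>UNIV. (cmod (\<beta> h))^2)" .
qed

lemma sg_cmod: "cmod (sg b) = 1" unfolding sg_def by simp

definition kq :: "bool \<Rightarrow> bool \<Rightarrow> real" where "kq a b = (if a = b then 1 else 1 / sqrt 2)"

lemma qbndF: "bnd (UNIV::bool set) UNIV (\<lambda>g h. cinner (psi a e g) (psi a' h f)) (kq a a')"
proof (cases "a = a'")
  case True
  then have k: "kq a a' = 1" unfolding kq_def by simp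
  show ?thesis unfolding k
    by (rule bnd_cong[OF bnd_delta[of f e]]) (auto simp: psi_inner True kq_def)
next
  case False
  then have k: "kq a a' = 1 / sqrt 2" unfolding kq_def by simp
  show ?thesis unfolding k
    by (rule bnd_cong[OF bnd_had[OF sg_cmod[of "e \<and> f"]]]) (auto simp: psi_inner False kq_def mult.commute)
qed

lemma qbndT: "bnd (UNIV::bool set) UNIV (\<lambda>g h. cinner (psi a g e) (psi a' f h)) (kq a a')"
proof (cases "a = a'")
  case True
  then have k: "kq a a' = 1" unfolding kq_def by simp
  show ?thesis unfolding k
    by (rule bnd_cong[OF bnd_delta[of f e]]) (auto simp: psi_inner True kq_def)
next
  case False
  then have k: "kq a a' = 1 / sqrt 2" unfolding kq_def by simp
  show ?thesis unfolding k
    by (rule bnd_cong[OF bnd_had[OF sg_cmod[of "e \<and> f"]]]) (auto simp: psi_inner False kq_def mult.commute)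
qed

fun kap :: "bool list \<Rightarrow> bool list \<Rightarrow> real" where
  "kap (a#s) (b#t) = kq a b * kap s t"
| "kap _ _ = 1"

lemma kq_nonneg: "kq a b \<ge> 0" unfolding kq_def by simp
lemma kap_nonneg: "kap s t \<ge> 0"
  by (induction s t rule: kap.induct) (simp_all add: kq_nonneg)
lemma kq_sym: "kq a b = kq b a" unfolding kq_def by auto
lemma kap_Nil2[simp]: "kap s [] = 1" by (cases s) auto
lemma kap_sym: "kap s t = kap t s"
  by (induction s t rule: kap.induct) (auto simp: kq_sym)

lemma bnd_one: "bnd (bitstrings 0) (bitstrings 0) (\<lambda>g h. 1) 1"
  unfolding bnd_def bs_0 by (simp add: norm_mult)
lemma cinner_Psi0: "cinner (Psi 0 a b c) (Psi 0 a' b' c') = 1"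
  unfolding Psi_0 cinner_def by simp

lemma blockF: "length s = n \<Longrightarrow> length t = n \<Longrightarrow> length e = n \<Longrightarrow> length f = n \<Longrightarrow>
  bnd (bitstrings n) (bitstrings n) (\<lambda>g h. cinner (Psi n s e g) (Psi n t h f)) (kap s t)"
proof (induction n arbitrary: s t e f)
  case 0
  then have "kap s t = 1" by simp
  then show ?case by (simp only:) (rule bnd_cong[OF bnd_one], simp add: cinner_Psi0)
next
  case (Suc n)
  from Suc.prems obtain a s' where s: "s = a#s'" "length s' = n" by (auto simp: length_Suc_conv)
  from Suc.prems obtain a' t' where t: "t = a'#t'" "length t' = n" by (auto simp: length_Suc_conv)
  from Suc.prems obtain e1 e' where e: "e = e1#e'" "length e' = n" by (auto simp: length_Suc_conv)
  from Suc.prems obtain f1 f' where f: "f = f1#f'" "length f' = n" by (auto simp: length_Suc_conv)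
  have IH: "bnd (bitstrings n) (bitstrings n) (\<lambda>g h. cinner (Psi n s' e' g) (Psi n t' h f')) (kap s' t')"
    using Suc.IH s t e f by simp
  have T: "bnd (UNIV \<times> bitstrings n) (UNIV \<times> bitstrings n)
     (\<lambda>(a1,g) (b1,h). cinner (psi a e1 a1) (psi a' b1 f1) * cinner (Psi n s' e' g) (Psi n t' h f'))
     (kq a a' * kap s' t')"
    by (rule tensor_bnd[OF _ _ _ _ qbndF IH kq_nonneg kap_nonneg]) auto
  have kk: "kap s t = kq a a' * kap s' t'" using s t by simp
  have "bnd (UNIV \<times> bitstrings n) (UNIV \<times> bitstrings n)
     (\<lambda>(a1,g) (b1,h). cinner (Psi (Suc n) s e (a1#g)) (Psi (Suc n) t (b1#h) f)) (kap s t)"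
    unfolding kk by (rule bnd_cong[OF T]) (auto simp: s t e f Psi_Suc cinner_kron)
  then show ?case by (rule bnd_cons)
qed

lemma blockT: "length s = n \<Longrightarrow> length t = n \<Longrightarrow> length e = n \<Longrightarrow> length f = n \<Longrightarrow>
  bnd (bitstrings n) (bitstrings n) (\<lambda>g h. cinner (Psi n s g e) (Psi n t f h)) (kap s t)"
proof (induction n arbitrary: s t e f)
  case 0
  then have "kap s t = 1" by simp
  then show ?case by (simp only:) (rule bnd_cong[OF bnd_one], simp add: cinner_Psi0)
next
  case (Suc n)
  from Suc.prems obtain a s' where s: "s = a#s'" "length s' = n" by (auto simp: length_Suc_conv)
  from Suc.prems obtain a' t' where t: "t = a'#t'" "length t' = n" by (auto simp: length_Suc_conv)
  from Suc.prems obtain e1 e' where e: "e = e1#e'" "length e' = n" by (auto simp: length_Suc_conv)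
  from Suc.prems obtain f1 f' where f: "f = f1#f'" "length f' = n" by (auto simp: length_Suc_conv)
  have IH: "bnd (bitstrings n) (bitstrings n) (\<lambda>g h. cinner (Psi n s' g e') (Psi n t' f' h)) (kap s' t')"
    using Suc.IH s t e f by simp
  have T: "bnd (UNIV \<times> bitstrings n) (UNIV \<times> bitstrings n)
     (\<lambda>(a1,g) (b1,h). cinner (psi a a1 e1) (psi a' f1 b1) * cinner (Psi n s' g e') (Psi n t' f' h))
     (kq a a' * kap s' t')"
    by (rule tensor_bnd[OF _ _ _ _ qbndT IH kq_nonneg kap_nonneg]) auto
  have kk: "kap s t = kq a a' * kap s' t'" using s t by simp
  have "bnd (UNIV \<times> bitstrings n) (UNIV \<times> bitstrings n)
     (\<lambda>(a1,g) (b1,h). cinner (Psi (Suc n) s (a1#g) e) (Psi (Suc n) t f (b1#h))) (kap s t)"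
    unfolding kk by (rule bnd_cong[OF T]) (auto simp: s t e f Psi_Suc cinner_kron)
  then show ?case by (rule bnd_cons)
qed

lemma kap_sum: "s \<in> bitstrings n \<Longrightarrow> (\<Sum>t\<in>bitstrings n. kap s t) = (1 + 1 / sqrt 2)^n"
proof (induction n arbitrary: s)
  case 0 then show ?case by (simp add: bs_0 bitstrings_def)
next
  case (Suc n)
  then obtain a s' where s: "s = a#s'" "s' \<in> bitstrings n"
    by (auto simp: bitstrings_def length_Suc_conv)
  have "(\<Sum>t\<in>bitstrings (Suc n). kap s t) = (\<Sum>b\<in>UNIV. \<Sum>t\<in>bitstrings n. kq a b * kap s' t)"
    unfolding sum_bs_Suc s by simp
  also have "\<dots> = (\<Sum>b\<in>UNIV. kq a b * (\<Sum>t\<in>bitstrings n. kap s' t))"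
    by (simp add: sum_distrib_left)
  also have "\<dots> = (\<Sum>b\<in>UNIV. kq a b) * (1 + 1 / sqrt 2)^n"
    using Suc.IH[OF s(2)] by (simp add: sum_distrib_right)
  also have "(\<Sum>b\<in>UNIV. kq a b) = 1 + 1 / sqrt 2"
    unfolding sum_bool kq_def by (cases a) auto
  finally show ?case by simp
qed

lemma amgm_sum:
  assumes x: "\<And>s. x s \<ge> 0"
  shows "(\<Sum>s\<in>bitstrings n. \<Sum>t\<in>bitstrings n. kap s t * (sqrt (x s) * sqrt (x t)))
     \<le> (1 + 1 / sqrt 2)^n * (\<Sum>s\<in>bitstrings n. x s)"
proof -
  define C where "C = (1 + 1 / sqrt 2)^n"
  have A: "(\<Sum>s\<in>bitstrings n. \<Sum>t\<in>bitstrings n. kap s t * x s) = C * (\<Sum>s\<in>bitstrings n. x s)"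
    unfolding sum_distrib_left
  proof (intro sum.cong refl)
    fix s assume "s \<in> bitstrings n"
    then show "(\<Sum>t\<in>bitstrings n. kap s t * x s) = C * x s"
      using kap_sum[of s n] unfolding C_def by (simp add: sum_distrib_right[symmetric] sum_distrib_left[symmetric] mult.commute)
  qed
  have B: "(\<Sum>s\<in>bitstrings n. \<Sum>t\<in>bitstrings n. kap s t * x t) = C * (\<Sum>s\<in>bitstrings n. x s)"
  proof -
    have "(\<Sum>s\<in>bitstrings n. \<Sum>t\<in>bitstrings n. kap s t * x t)
      = (\<Sum>t\<in>bitstrings n. \<Sum>s\<in>bitstrings n. kap t s * x t)"
      by (subst sum.swap) (simp add: kap_sym)
    then show ?thesis using A by simp
  qed
  have "(\<Sum>s\<in>bitstrings n. \<Sum>t\<in>bitstrings n. kap s t * (sqrt (x s) * sqrt (x t)))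
     \<le> (\<Sum>s\<in>bitstrings n. \<Sum>t\<in>bitstrings n. kap s t * x s / 2 + kap s t * x t / 2)"
  proof (intro sum_mono)
    fix s t
    have "0 \<le> (sqrt (x s) - sqrt (x t))^2" by simp
    then have "sqrt (x s) * sqrt (x t) \<le> (x s + x t) / 2"
      using x[of s] x[of t] by (simp add: power2_eq_square algebra_simps)
    then have "kap s t * (sqrt (x s) * sqrt (x t)) \<le> kap s t * ((x s + x t) / 2)"
      using kap_nonneg by (rule mult_left_mono)
    then show "kap s t * (sqrt (x s) * sqrt (x t)) \<le> kap s t * x s / 2 + kap s t * x t / 2"
      by (simp add: algebra_simps add_divide_distrib)
  qed
  also have "\<dots> = (\<Sum>s\<in>bitstrings n. \<Sum>t\<in>bitstrings n. kap s t * x s) / 2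
      + (\<Sum>s\<in>bitstrings n. \<Sum>t\<in>bitstrings n. kap s t * x t) / 2"
    by (simp add: sum.distrib sum_divide_distrib)
  also have "\<dots> = C * (\<Sum>s\<in>bitstrings n. x s)" unfolding A B by simp
  finally show ?thesis unfolding C_def .
qed

lemma vec_bnd:
  assumes b: "bnd G H K \<kappa>" and k: "\<kappa> \<ge> 0" and fin: "finite G" "finite H"
    and da: "\<And>g. g \<in> G \<Longrightarrow> dim_vec (a g) = D" and db: "\<And>h. h \<in> H \<Longrightarrow> dim_vec (b h) = D"
  shows "cmod (\<Sum>g\<in>G. \<Sum>h\<in>H. K g h * cinner (a g) (b h))
     \<le> \<kappa> * sqrt (\<Sum>g\<in>G. nrm2 (a g)) * sqrt (\<Sum>h\<in>H. nrm2 (b h))"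
proof -
  define na where "na k = (\<Sum>g\<in>G. (cmod (a g $ k))^2)" for k
  define nb where "nb k = (\<Sum>h\<in>H. (cmod (b h $ k))^2)" for k
  have na0: "na k \<ge> 0" for k unfolding na_def by (simp add: sum_nonneg)
  have nb0: "nb k \<ge> 0" for k unfolding nb_def by (simp add: sum_nonneg)
  have "(\<Sum>g\<in>G. \<Sum>h\<in>H. K g h * cinner (a g) (b h))
      = (\<Sum>g\<in>G. \<Sum>h\<in>H. \<Sum>k<D. cnj (a g $ k) * K g h * b h $ k)"
    unfolding cinner_def using da by (intro sum.cong refl) (simp add: sum_distrib_left mult_ac)
  also have "\<dots> = (\<Sum>g\<in>G. \<Sum>k<D. \<Sum>h\<in>H. cnj (a g $ k) * K g h * b h $ k)"
    by (intro sum.cong refl) (rule sum.swap)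
  also have "\<dots> = (\<Sum>k<D. \<Sum>g\<in>G. \<Sum>h\<in>H. cnj (a g $ k) * K g h * b h $ k)"
    by (rule sum.swap)
  finally have eq: "(\<Sum>g\<in>G. \<Sum>h\<in>H. K g h * cinner (a g) (b h))
      = (\<Sum>k<D. \<Sum>g\<in>G. \<Sum>h\<in>H. cnj (a g $ k) * K g h * b h $ k)" .
  have "cmod (\<Sum>k<D. \<Sum>g\<in>G. \<Sum>h\<in>H. cnj (a g $ k) * K g h * b h $ k)
     \<le> (\<Sum>k<D. cmod (\<Sum>g\<in>G. \<Sum>h\<in>H. cnj (a g $ k) * K g h * b h $ k))" by (rule norm_sum)
  also have "\<dots> \<le> (\<Sum>k<D. \<kappa> * (sqrt (na k) * sqrt (nb k)))"
  proof (rule sum_mono)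
    fix k
    show "cmod (\<Sum>g\<in>G. \<Sum>h\<in>H. cnj (a g $ k) * K g h * b h $ k) \<le> \<kappa> * (sqrt (na k) * sqrt (nb k))"
      using b[unfolded bnd_def, rule_format, of "\<lambda>g. a g $ k" "\<lambda>h. b h $ k"]
      unfolding na_def nb_def by (simp only: mult.assoc)
  qed
  also have "\<dots> = \<kappa> * (\<Sum>k<D. sqrt (na k) * sqrt (nb k))" by (simp add: sum_distrib_left)
  also have "\<dots> \<le> \<kappa> * (sqrt (\<Sum>k<D. (sqrt (na k))^2) * sqrt (\<Sum>k<D. (sqrt (nb k))^2))"
    using k by (intro mult_left_mono cs_sqrt) auto
  also have "(\<Sum>k<D. (sqrt (na k))^2) = (\<Sum>g\<in>G. nrm2 (a g))"
  proof -
    have "(\<Sum>k<D. (sqrt (na k))^2) = (\<Sum>k<D. \<Sum>g\<in>G. (cmod (a g $ k))^2)"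
      using na0 unfolding na_def by simp
    also have "\<dots> = (\<Sum>g\<in>G. \<Sum>k<D. (cmod (a g $ k))^2)" by (rule sum.swap)
    also have "\<dots> = (\<Sum>g\<in>G. nrm2 (a g))" unfolding nrm2_def using da by simp
    finally show ?thesis .
  qed
  also have "(\<Sum>k<D. (sqrt (nb k))^2) = (\<Sum>h\<in>H. nrm2 (b h))"
  proof -
    have "(\<Sum>k<D. (sqrt (nb k))^2) = (\<Sum>k<D. \<Sum>h\<in>H. (cmod (b h $ k))^2)"
      using nb0 unfolding nb_def by simp
    also have "\<dots> = (\<Sum>h\<in>H. \<Sum>k<D. (cmod (b h $ k))^2)" by (rule sum.swap)
    also have "\<dots> = (\<Sum>h\<in>H. nrm2 (b h))" unfolding nrm2_def using db by simp
    finally show ?thesis .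
  qed
  finally show ?thesis unfolding eq by (simp add: mult_ac)
qed

lemma sum_group': "finite S \<Longrightarrow> finite T \<Longrightarrow> (\<And>x. x \<in> S \<Longrightarrow> g x \<in> T) \<Longrightarrow>
   sum h S = (\<Sum>y\<in>T. \<Sum>x\<in>{x\<in>S. g x = y}. h x)"
  by (rule sum.group[symmetric]) auto

lemma stepB:
  fixes X :: "'e \<Rightarrow> complex mat" and Y :: "'f \<Rightarrow> complex mat"
    and kk :: "'r \<Rightarrow> 'e" and ll :: "'q \<Rightarrow> 'f"
    and u :: "'r \<Rightarrow> complex vec" and u' :: "'q \<Rightarrow> complex vec"
  assumes fin: "finite E" "finite F" "finite Rs" "finite Qs"
    and hX: "\<And>e. e \<in> E \<Longrightarrow> hproj D (X e)" and hY: "\<And>f. f \<in> F \<Longrightarrow> hproj D (Y f)"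
    and comm: "\<And>e f. e \<in> E \<Longrightarrow> f \<in> F \<Longrightarrow> X e * Y f = Y f * X e"
    and cX: "complete D E X" and cY: "complete D F Y"
    and kE: "\<And>r. r \<in> Rs \<Longrightarrow> kk r \<in> E" and uX: "\<And>r. r \<in> Rs \<Longrightarrow> X (kk r) *\<^sub>v u r = u r"
    and du: "\<And>r. r \<in> Rs \<Longrightarrow> dim_vec (u r) = D"
    and lF: "\<And>q. q \<in> Qs \<Longrightarrow> ll q \<in> F" and uY: "\<And>q. q \<in> Qs \<Longrightarrow> Y (ll q) *\<^sub>v u' q = u' q"
    and du': "\<And>q. q \<in> Qs \<Longrightarrow> dim_vec (u' q) = D"
    and blk: "\<And>e f. e \<in> E \<Longrightarrow> f \<in> F \<Longrightarrow> bnd {r \<in> Rs. kk r = e} {q \<in> Qs. ll q = f} Ov c"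
    and c: "c \<ge> 0"
  shows "cmod (\<Sum>r\<in>Rs. \<Sum>q\<in>Qs. Ov r q * cinner (u r) (u' q))
    \<le> c * sqrt (\<Sum>r\<in>Rs. nrm2 (u r)) * sqrt (\<Sum>q\<in>Qs. nrm2 (u' q))"
proof -
  define M where "M e f = X e * Y f" for e f
  define RS where "RS e = {r \<in> Rs. kk r = e}" for e
  define QS where "QS f = {q \<in> Qs. ll q = f}" for f
  define A where "A e f = (\<Sum>r\<in>RS e. nrm2 (M e f *\<^sub>v u r))" for e f
  define B where "B e f = (\<Sum>q\<in>QS f. nrm2 (M e f *\<^sub>v u' q))" for e f
  have carX: "X e \<in> carrier_mat D D" if "e \<in> E" for e using hX[OF that] unfolding hproj_def by auto
  have carY: "Y f \<in> carrier_mat D D" if "f \<in> F" for f using hY[OF that] unfolding hproj_def by auto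
  have hM: "hproj D (M e f)" if "e \<in> E" "f \<in> F" for e f
    unfolding M_def using hproj_prod_comm[OF hX[OF that(1)] hY[OF that(2)] comm[OF that]] .
  have Mv: "M e f *\<^sub>v v = X e *\<^sub>v (Y f *\<^sub>v v)" if "e \<in> E" "f \<in> F" "dim_vec v = D" for e f v
    unfolding M_def by (rule assoc_mult_mat_vec[OF carX[OF that(1)] carY[OF that(2)] carrier_vecI[OF that(3)]])
  have Mv': "M e f *\<^sub>v v = Y f *\<^sub>v (X e *\<^sub>v v)" if "e \<in> E" "f \<in> F" "dim_vec v = D" for e f v
    unfolding M_def comm[OF that(1,2)] by (rule assoc_mult_mat_vec[OF carY[OF that(2)] carX[OF that(1)] carrier_vecI[OF that(3)]])
  have inner_eq: "cinner (u r) (u' q) = cinner (M e f *\<^sub>v u r) (M e f *\<^sub>v u' q)"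
    if r: "r \<in> RS e" and q: "q \<in> QS f" and e: "e \<in> E" and f: "f \<in> F" for r q e f
  proof -
    have r': "r \<in> Rs" "kk r = e" and q': "q \<in> Qs" "ll q = f" using r q unfolding RS_def QS_def by auto
    have "cinner (u r) (u' q) = cinner (X e *\<^sub>v u r) (Y f *\<^sub>v u' q)"
      using uX[OF r'(1)] uY[OF q'(1)] r' q' by simp
    also have "\<dots> = cinner (u r) (X e *\<^sub>v (Y f *\<^sub>v u' q))"
      using hproj_inner[OF hX[OF e]] du[OF r'(1)] du'[OF q'(1)] carY[OF f] by simp
    also have "\<dots> = cinner (u r) (M e f *\<^sub>v u' q)" using Mv[OF e f du'[OF q'(1)]] by simp
    also have "\<dots> = cinner (u r) (M e f *\<^sub>v (M e f *\<^sub>v u' q))"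
      using hproj_idem_vec[OF hM[OF e f] du'[OF q'(1)]] by simp
    also have "\<dots> = cinner (M e f *\<^sub>v u r) (M e f *\<^sub>v u' q)"
    proof -
      have "dim_row (M e f) = D" using hM[OF e f] unfolding hproj_def by auto
      then show ?thesis using hproj_inner[OF hM[OF e f], of "u r" "M e f *\<^sub>v u' q"] du[OF r'(1)] by simp
    qed
    finally show ?thesis .
  qed
  have split: "(\<Sum>r\<in>Rs. \<Sum>q\<in>Qs. Ov r q * cinner (u r) (u' q))
     = (\<Sum>e\<in>E. \<Sum>f\<in>F. \<Sum>r\<in>RS e. \<Sum>q\<in>QS f. Ov r q * cinner (M e f *\<^sub>v u r) (M e f *\<^sub>v u' q))"
  proof -
    have "(\<Sum>r\<in>Rs. \<Sum>q\<in>Qs. Ov r q * cinner (u r) (u' q))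
       = (\<Sum>e\<in>E. \<Sum>r\<in>RS e. \<Sum>q\<in>Qs. Ov r q * cinner (u r) (u' q))"
      unfolding RS_def by (rule sum_group'[OF fin(3) fin(1) kE])
    also have "\<dots> = (\<Sum>e\<in>E. \<Sum>r\<in>RS e. \<Sum>f\<in>F. \<Sum>q\<in>QS f. Ov r q * cinner (u r) (u' q))"
      unfolding QS_def by (intro sum.cong refl sum_group'[OF fin(4) fin(2) lF])
    also have "\<dots> = (\<Sum>e\<in>E. \<Sum>f\<in>F. \<Sum>r\<in>RS e. \<Sum>q\<in>QS f. Ov r q * cinner (u r) (u' q))"
      by (intro sum.cong refl) (rule sum.swap)
    also have "\<dots> = (\<Sum>e\<in>E. \<Sum>f\<in>F. \<Sum>r\<in>RS e. \<Sum>q\<in>QS f. Ov r q * cinner (M e f *\<^sub>v u r) (M e f *\<^sub>v u' q))"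
      using inner_eq by (intro sum.cong refl) auto
    finally show ?thesis .
  qed
  have "cmod (\<Sum>e\<in>E. \<Sum>f\<in>F. \<Sum>r\<in>RS e. \<Sum>q\<in>QS f. Ov r q * cinner (M e f *\<^sub>v u r) (M e f *\<^sub>v u' q))
     \<le> (\<Sum>e\<in>E. \<Sum>f\<in>F. cmod (\<Sum>r\<in>RS e. \<Sum>q\<in>QS f. Ov r q * cinner (M e f *\<^sub>v u r) (M e f *\<^sub>v u' q)))"
    by (rule order_trans[OF norm_sum sum_mono[OF norm_sum]])
  also have "\<dots> \<le> (\<Sum>e\<in>E. \<Sum>f\<in>F. c * (sqrt (A e f) * sqrt (B e f)))"
  proof (intro sum_mono)
    fix e f assume e: "e \<in> E" and f: "f \<in> F"
    have "cmod (\<Sum>r\<in>RS e. \<Sum>q\<in>QS f. Ov r q * cinner (M e f *\<^sub>v u r) (M e f *\<^sub>v u' q))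
        \<le> c * sqrt (\<Sum>r\<in>RS e. nrm2 (M e f *\<^sub>v u r)) * sqrt (\<Sum>q\<in>QS f. nrm2 (M e f *\<^sub>v u' q))"
      by (rule vec_bnd[OF blk[OF e f, folded RS_def QS_def] c])
         (use fin hM[OF e f] in \<open>auto simp: RS_def QS_def hproj_def\<close>)
    then show "cmod (\<Sum>r\<in>RS e. \<Sum>q\<in>QS f. Ov r q * cinner (M e f *\<^sub>v u r) (M e f *\<^sub>v u' q))
        \<le> c * (sqrt (A e f) * sqrt (B e f))" unfolding A_def B_def by (simp add: mult_ac)
  qed
  also have "\<dots> = c * (\<Sum>x\<in>E \<times> F. sqrt (A (fst x) (snd x)) * sqrt (B (fst x) (snd x)))"
    by (simp add: sum_distrib_left sum_prod_split)
  also have "\<dots> \<le> c * (sqrt (\<Sum>x\<in>E \<times> F. (sqrt (A (fst x) (snd x)))^2) * sqrt (\<Sum>x\<in>E \<times> F. (sqrt (B (fst x) (snd x)))^2))"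
    using c by (intro mult_left_mono cs_sqrt) auto
  also have "(\<Sum>x\<in>E \<times> F. (sqrt (A (fst x) (snd x)))^2) = (\<Sum>r\<in>Rs. nrm2 (u r))"
  proof -
    have A0: "A e f \<ge> 0" for e f unfolding A_def by (simp add: sum_nonneg nrm2_nonneg)
    have "(\<Sum>x\<in>E \<times> F. (sqrt (A (fst x) (snd x)))^2) = (\<Sum>e\<in>E. \<Sum>f\<in>F. A e f)"
      using A0 by (simp add: sum_prod_split)
    also have "\<dots> = (\<Sum>e\<in>E. \<Sum>r\<in>RS e. \<Sum>f\<in>F. nrm2 (Y f *\<^sub>v u r))"
    proof (intro sum.cong refl)
      fix e assume e: "e \<in> E"
      have "(\<Sum>f\<in>F. A e f) = (\<Sum>r\<in>RS e. \<Sum>f\<in>F. nrm2 (M e f *\<^sub>v u r))"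
        unfolding A_def by (rule sum.swap)
      also have "\<dots> = (\<Sum>r\<in>RS e. \<Sum>f\<in>F. nrm2 (Y f *\<^sub>v u r))"
      proof (intro sum.cong refl)
        fix r f assume r: "r \<in> RS e" and f: "f \<in> F"
        then have rr: "r \<in> Rs" "kk r = e" unfolding RS_def by auto
        then show "nrm2 (M e f *\<^sub>v u r) = nrm2 (Y f *\<^sub>v u r)"
          using Mv'[OF e f du[OF rr(1)]] uX[OF rr(1)] by simp
      qed
      finally show "(\<Sum>f\<in>F. A e f) = (\<Sum>r\<in>RS e. \<Sum>f\<in>F. nrm2 (Y f *\<^sub>v u r))" .
    qed
    also have "\<dots> = (\<Sum>e\<in>E. \<Sum>r\<in>RS e. nrm2 (u r))"
      using complete_nrm[OF cY] hY du unfolding RS_def by (intro sum.cong refl) auto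
    also have "\<dots> = (\<Sum>r\<in>Rs. nrm2 (u r))"
      unfolding RS_def using sum_group'[OF fin(3) fin(1) kE, where h="\<lambda>r. nrm2 (u r)"] by simp
    finally show ?thesis .
  qed
  also have "(\<Sum>x\<in>E \<times> F. (sqrt (B (fst x) (snd x)))^2) = (\<Sum>q\<in>Qs. nrm2 (u' q))"
  proof -
    have B0: "B e f \<ge> 0" for e f unfolding B_def by (simp add: sum_nonneg nrm2_nonneg)
    have "(\<Sum>x\<in>E \<times> F. (sqrt (B (fst x) (snd x)))^2) = (\<Sum>e\<in>E. \<Sum>f\<in>F. B e f)"
      using B0 by (simp add: sum_prod_split)
    also have "\<dots> = (\<Sum>f\<in>F. \<Sum>e\<in>E. B e f)" by (rule sum.swap)
    also have "\<dots> = (\<Sum>f\<in>F. \<Sum>q\<in>QS f. \<Sum>e\<in>E. nrm2 (X e *\<^sub>v u' q))"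
    proof (intro sum.cong refl)
      fix f assume f: "f \<in> F"
      have "(\<Sum>e\<in>E. B e f) = (\<Sum>q\<in>QS f. \<Sum>e\<in>E. nrm2 (M e f *\<^sub>v u' q))"
        unfolding B_def by (rule sum.swap)
      also have "\<dots> = (\<Sum>q\<in>QS f. \<Sum>e\<in>E. nrm2 (X e *\<^sub>v u' q))"
      proof (intro sum.cong refl)
        fix q e assume q: "q \<in> QS f" and e: "e \<in> E"
        then have qq: "q \<in> Qs" "ll q = f" unfolding QS_def by auto
        then show "nrm2 (M e f *\<^sub>v u' q) = nrm2 (X e *\<^sub>v u' q)"
          using Mv[OF e f du'[OF qq(1)]] uY[OF qq(1)] by simp
      qed
      finally show "(\<Sum>e\<in>E. B e f) = (\<Sum>q\<in>QS f. \<Sum>e\<in>E. nrm2 (X e *\<^sub>v u' q))" .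
    qed
    also have "\<dots> = (\<Sum>f\<in>F. \<Sum>q\<in>QS f. nrm2 (u' q))"
      using complete_nrm[OF cX] hX du' unfolding QS_def by (intro sum.cong refl) auto
    also have "\<dots> = (\<Sum>q\<in>Qs. nrm2 (u' q))"
      unfolding QS_def using sum_group'[OF fin(4) fin(2) lF, where h="\<lambda>q. nrm2 (u' q)"] by simp
    finally show ?thesis .
  qed
  finally show ?thesis unfolding split by (simp add: mult_ac)
qed

lemma phi_expand:
  assumes U: "U \<in> carrier_mat (N*dE) (N*dE)" and chi: "dim_vec chi = dE" and a: "dim_vec a = N"
    and k: "k < N*dE"
  shows "(U *\<^sub>v kron_vec a chi) $ k = (\<Sum>x<N. a$x * (U *\<^sub>v kron_vec (unit_vec N x) chi) $ k)"
proof -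
  have "(U *\<^sub>v kron_vec a chi) $ k = (\<Sum>l<N*dE. U $$ (k,l) * kron_vec a chi $ l)"
    using mult_vec_idx[OF U, of "kron_vec a chi" k] chi a k by simp
  also have "\<dots> = (\<Sum>x<N. \<Sum>j<dE. U $$ (k, x*dE+j) * (a$x * chi$j))"
    unfolding sum_split_prod using chi a by (intro sum.cong refl) (simp add: kron_vec_idx lt_mult_split)
  also have "\<dots> = (\<Sum>x<N. a$x * (\<Sum>x'<N. \<Sum>j<dE. U $$ (k, x'*dE+j) * (unit_vec N x $ x' * chi$j)))"
  proof (intro sum.cong refl)
    fix x assume x: "x \<in> {..<N}"
    have "(\<Sum>x'<N. \<Sum>j<dE. U $$ (k, x'*dE+j) * (unit_vec N x $ x' * chi$j))
        = (\<Sum>x'<N. if x' = x then (\<Sum>j<dE. U $$ (k, x*dE+j) * chi$j) else 0)"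
      using x by (intro sum.cong refl) auto
    also have "\<dots> = (\<Sum>j<dE. U $$ (k, x*dE+j) * chi$j)" using x by simp
    finally show "(\<Sum>j<dE. U $$ (k, x*dE+j) * (a$x * chi$j)) =
      a$x * (\<Sum>x'<N. \<Sum>j<dE. U $$ (k, x'*dE+j) * (unit_vec N x $ x' * chi$j))"
      by (simp add: sum_distrib_left mult_ac)
  qed
  also have "\<dots> = (\<Sum>x<N. a$x * (U *\<^sub>v kron_vec (unit_vec N x) chi) $ k)"
  proof (intro sum.cong refl)
    fix x assume x: "x \<in> {..<N}"
    have "(U *\<^sub>v kron_vec (unit_vec N x) chi) $ k = (\<Sum>l<N*dE. U $$ (k,l) * kron_vec (unit_vec N x) chi $ l)"
      using mult_vec_idx[OF U, of "kron_vec (unit_vec N x) chi" k] chi k by simp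
    also have "\<dots> = (\<Sum>x'<N. \<Sum>j<dE. U $$ (k, x'*dE+j) * (unit_vec N x $ x' * chi$j))"
      unfolding sum_split_prod using chi by (intro sum.cong refl) (simp add: kron_vec_idx lt_mult_split)
    finally show "a$x * (\<Sum>x'<N. \<Sum>j<dE. U $$ (k, x'*dE+j) * (unit_vec N x $ x' * chi$j))
       = a$x * (U *\<^sub>v kron_vec (unit_vec N x) chi) $ k" by simp
  qed
  finally show ?thesis .
qed

lemma unitary_cinner:
  assumes u: "unitary D U" and v: "dim_vec v = D" and w: "dim_vec w = D"
  shows "cinner (U *\<^sub>v v) (U *\<^sub>v w) = cinner v w"
proof -
  have car: "U \<in> carrier_mat D D" and uu: "mat_adjoint U * U = 1\<^sub>m D"
    using u unfolding unitary_def by auto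
  have "cinner (U *\<^sub>v v) (U *\<^sub>v w) = cinner v (mat_adjoint U *\<^sub>v (U *\<^sub>v w))"
    using cinner_adj[OF car v] car w by simp
  also have "mat_adjoint U *\<^sub>v (U *\<^sub>v w) = (mat_adjoint U * U) *\<^sub>v w"
    by (rule assoc_mult_mat_vec[OF adj_carrier[OF car] car carrier_vecI[OF w], symmetric])
  also have "\<dots> = w" unfolding uu by (rule one_mult_mat_vec[OF carrier_vecI[OF w]])
  finally show ?thesis .
qed

lemma nrm2_of_cinner: "cinner v v = cinner w w \<Longrightarrow> nrm2 v = nrm2 w"
  by (simp add: cinner_self)

lemma ve_nrm:
  assumes u: "unitary (N*dE) U" and chi: "dim_vec chi = dE" and cc: "cinner chi chi = 1" and x: "x < N"
  shows "nrm2 (U *\<^sub>v kron_vec (unit_vec N x) chi) = 1"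
proof -
  have "cinner (U *\<^sub>v kron_vec (unit_vec N x) chi) (U *\<^sub>v kron_vec (unit_vec N x) chi)
      = cinner (kron_vec (unit_vec N x) chi) (kron_vec (unit_vec N x) chi)"
    using unitary_cinner[OF u] chi by simp
  also have "\<dots> = cinner (unit_vec N x) (unit_vec N x) * cinner chi chi" by (simp add: cinner_kron)
  also have "cinner (unit_vec N x) (unit_vec N x) = (1::complex)"
    unfolding cinner_def using x by (simp add: if_distrib cong: if_cong)
  finally show ?thesis using cc by (simp add: cinner_self)
qed

definition realv :: "complex vec \<Rightarrow> bool" where
  "realv v \<longleftrightarrow> (\<forall>i<dim_vec v. cnj (v$i) = v$i)"

lemma realv_kron: "realv v \<Longrightarrow> realv w \<Longrightarrow> realv (kron_vec v w)"
  unfolding realv_def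
  by (auto simp: kron_vec_idx div_lt_mult mod_lt_mult)

lemma realv_kvl: "(\<And>v. v \<in> set vs \<Longrightarrow> realv v) \<Longrightarrow> realv (kron_vec_list vs)"
  by (induction vs) (auto simp: realv_kron, simp add: realv_def)

lemma realv_ket: "realv (ket b)" unfolding realv_def ket_def by auto
lemma realv_hat: "realv (ket_hat b)" unfolding realv_def ket_hat_def by auto
lemma realv_psi: "realv (psi a x y)" unfolding psi_def by (auto intro: realv_kron realv_ket realv_hat)

lemma Psi_real: "x < 4^n \<Longrightarrow> cnj (Psi n s r0 r1 $ x) = Psi n s r0 r1 $ x"
proof -
  assume x: "x < 4^n"
  have "realv (Psi n s r0 r1)" unfolding Psi_def by (rule realv_kvl) (auto simp: realv_psi)
  then show ?thesis using x unfolding realv_def by simp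
qed

lemma bnd_reindex:
  assumes b: "bnd G' H' (\<lambda>g h. K (p g) (q h)) \<kappa>" and p: "bij_betw p G' G" and q: "bij_betw q H' H"
  shows "bnd G H K \<kappa>"
  unfolding bnd_def
proof (intro allI)
  fix \<alpha> \<beta>
  have "cmod (\<Sum>g\<in>G'. \<Sum>h\<in>H'. cnj (\<alpha> (p g)) * K (p g) (q h) * \<beta> (q h))
      \<le> \<kappa> * sqrt (\<Sum>g\<in>G'. (cmod (\<alpha> (p g)))^2) * sqrt (\<Sum>h\<in>H'. (cmod (\<beta> (q h)))^2)"
    using b[unfolded bnd_def, rule_format, of "\<lambda>g. \<alpha> (p g)" "\<lambda>h. \<beta> (q h)"] .
  moreover have "(\<Sum>g\<in>G'. \<Sum>h\<in>H'. cnj (\<alpha> (p g)) * K (p g) (q h) * \<beta> (q h))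
      = (\<Sum>g\<in>G. \<Sum>h\<in>H. cnj (\<alpha> g) * K g h * \<beta> h)"
  proof -
    have "(\<Sum>g\<in>G'. \<Sum>h\<in>H'. cnj (\<alpha> (p g)) * K (p g) (q h) * \<beta> (q h))
      = (\<Sum>g\<in>G'. \<Sum>h\<in>H. cnj (\<alpha> (p g)) * K (p g) h * \<beta> h)"
      by (intro sum.cong refl) (rule sum.reindex_bij_betw[OF q])
    also have "\<dots> = (\<Sum>g\<in>G. \<Sum>h\<in>H. cnj (\<alpha> g) * K g h * \<beta> h)"
      by (rule sum.reindex_bij_betw[OF p])
    finally show ?thesis .
  qed
  moreover have "(\<Sum>g\<in>G'. (cmod (\<alpha> (p g)))^2) = (\<Sum>g\<in>G. (cmod (\<alpha> g))^2)"
    using sum.reindex_bij_betw[OF p] by simp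
  moreover have "(\<Sum>h\<in>H'. (cmod (\<beta> (q h)))^2) = (\<Sum>h\<in>H. (cmod (\<beta> h))^2)"
    using sum.reindex_bij_betw[OF q] by simp
  ultimately show "cmod (\<Sum>g\<in>G. \<Sum>h\<in>H. cnj (\<alpha> g) * K g h * \<beta> h)
      \<le> \<kappa> * sqrt (\<Sum>g\<in>G. (cmod (\<alpha> g))^2) * sqrt (\<Sum>h\<in>H. (cmod (\<beta> h))^2)" by simp
qed

lemma bij_fst: "e \<in> bitstrings n \<Longrightarrow>
  bij_betw (\<lambda>g. (e,g)) (bitstrings n) {r \<in> bitstrings n \<times> bitstrings n. fst r = e}"
  by (auto simp: bij_betw_def inj_on_def image_iff)
lemma bij_snd: "e \<in> bitstrings n \<Longrightarrow>
  bij_betw (\<lambda>g. (g,e)) (bitstrings n) {r \<in> bitstrings n \<times> bitstrings n. snd r = e}"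
  by (auto simp: bij_betw_def inj_on_def image_iff)

lemma block_bnd:
  assumes s: "s \<in> bitstrings n" and t: "t \<in> bitstrings n" and e: "e \<in> bitstrings n" and f: "f \<in> bitstrings n"
  shows "bnd {r \<in> bitstrings n \<times> bitstrings n. (if b then snd r else fst r) = e}
             {q \<in> bitstrings n \<times> bitstrings n. (if b then fst q else snd q) = f}
             (\<lambda>r q. cinner (Psi n s (fst r) (snd r)) (Psi n t (fst q) (snd q))) (kap s t)"
proof (cases b)
  case True
  have "bnd (bitstrings n) (bitstrings n) (\<lambda>g h. cinner (Psi n s g e) (Psi n t f h)) (kap s t)"
    using s t e f by (intro blockT) (auto simp: bitstrings_def)
  then show ?thesis using True
    by (auto intro!: bnd_reindex[OF _ bij_snd[OF e] bij_fst[OF f]])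
next
  case False
  have "bnd (bitstrings n) (bitstrings n) (\<lambda>g h. cinner (Psi n s e g) (Psi n t h f)) (kap s t)"
    using s t e f by (intro blockF) (auto simp: bitstrings_def)
  then show ?thesis using False
    by (auto intro!: bnd_reindex[OF _ bij_fst[OF e] bij_snd[OF f]])
qed

lemma core_abstract:
  fixes a v :: "'j \<Rightarrow> nat \<Rightarrow> complex" and w :: "nat \<Rightarrow> nat \<Rightarrow> complex" and N D :: nat
  assumes fin: "finite J" and real: "\<And>j x. j \<in> J \<Longrightarrow> x < N \<Longrightarrow> cnj (a j x) = a j x"
    and w1: "\<And>x. x < N \<Longrightarrow> (\<Sum>k<D. (cmod (w x k))^2) = 1"
  shows "cmod (\<Sum>j\<in>J. \<Sum>x<N. \<Sum>k<D. a j x * cnj (v j k) * w x k)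
    \<le> sqrt (real N) * sqrt (Re (\<Sum>j\<in>J. \<Sum>j'\<in>J. (\<Sum>x<N. cnj (a j x) * a j' x) * (\<Sum>k<D. cnj (v j k) * v j' k)))"
proof -
  define W where "W x k = (\<Sum>j\<in>J. cnj (a j x) * v j k)" for x k
  have cW: "cnj (W x k) = (\<Sum>j\<in>J. a j x * cnj (v j k))" for x k
    unfolding W_def by (simp add: sum_conjugate[symmetric, simplified])
  have e1: "(\<Sum>j\<in>J. \<Sum>x<N. \<Sum>k<D. a j x * cnj (v j k) * w x k) = (\<Sum>x<N. \<Sum>k<D. cnj (W x k) * w x k)"
  proof -
    have "(\<Sum>j\<in>J. \<Sum>x<N. \<Sum>k<D. a j x * cnj (v j k) * w x k) = (\<Sum>x<N. \<Sum>j\<in>J. \<Sum>k<D. a j x * cnj (v j k) * w x k)"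
      by (rule sum.swap)
    also have "\<dots> = (\<Sum>x<N. \<Sum>k<D. \<Sum>j\<in>J. a j x * cnj (v j k) * w x k)"
      by (intro sum.cong refl) (rule sum.swap)
    also have "\<dots> = (\<Sum>x<N. \<Sum>k<D. cnj (W x k) * w x k)"
      unfolding cW by (simp add: sum_distrib_right)
    finally show ?thesis .
  qed
  have e2: "(\<Sum>x<N. \<Sum>k<D. cnj (W x k) * W x k)
     = (\<Sum>j\<in>J. \<Sum>j'\<in>J. (\<Sum>x<N. cnj (a j x) * a j' x) * (\<Sum>k<D. cnj (v j k) * v j' k))"
  proof -
    have "(\<Sum>x<N. \<Sum>k<D. cnj (W x k) * W x k)
       = (\<Sum>x<N. \<Sum>k<D. \<Sum>j\<in>J. \<Sum>j'\<in>J. (cnj (a j x) * a j' x) * (cnj (v j k) * v j' k))"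
    proof (intro sum.cong refl)
      fix x k assume x: "x \<in> {..<N}"
      have "cnj (W x k) * W x k = (\<Sum>j\<in>J. \<Sum>j'\<in>J. (a j x * cnj (v j k)) * (cnj (a j' x) * v j' k))"
      proof -
        have "cnj (W x k) * W x k = (\<Sum>j\<in>J. a j x * cnj (v j k)) * (\<Sum>j'\<in>J. cnj (a j' x) * v j' k)"
          by (simp only: cW) (simp only: W_def)
        then show ?thesis by (simp only: sum_product)
      qed
      also have "\<dots> = (\<Sum>j\<in>J. \<Sum>j'\<in>J. (cnj (a j x) * a j' x) * (cnj (v j k) * v j' k))"
      proof (intro sum.cong refl)
        fix j j' assume "j \<in> J" "j' \<in> J"
        then have "cnj (a j x) = a j x" "cnj (a j' x) = a j' x" using real x by auto
        then show "(a j x * cnj (v j k)) * (cnj (a j' x) * v j' k) = (cnj (a j x) * a j' x) * (cnj (v j k) * v j' k)"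
          by (simp add: mult_ac)
      qed
      finally show "cnj (W x k) * W x k = (\<Sum>j\<in>J. \<Sum>j'\<in>J. (cnj (a j x) * a j' x) * (cnj (v j k) * v j' k))" .
    qed
    also have "\<dots> = (\<Sum>x<N. \<Sum>j\<in>J. \<Sum>k<D. \<Sum>j'\<in>J. (cnj (a j x) * a j' x) * (cnj (v j k) * v j' k))"
      by (intro sum.cong refl) (rule sum.swap)
    also have "\<dots> = (\<Sum>x<N. \<Sum>j\<in>J. \<Sum>j'\<in>J. \<Sum>k<D. (cnj (a j x) * a j' x) * (cnj (v j k) * v j' k))"
      by (intro sum.cong refl) (rule sum.swap)
    also have "\<dots> = (\<Sum>j\<in>J. \<Sum>x<N. \<Sum>j'\<in>J. \<Sum>k<D. (cnj (a j x) * a j' x) * (cnj (v j k) * v j' k))"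
      by (rule sum.swap)
    also have "\<dots> = (\<Sum>j\<in>J. \<Sum>j'\<in>J. \<Sum>x<N. \<Sum>k<D. (cnj (a j x) * a j' x) * (cnj (v j k) * v j' k))"
      by (intro sum.cong refl) (rule sum.swap)
    also have "\<dots> = (\<Sum>j\<in>J. \<Sum>j'\<in>J. (\<Sum>x<N. cnj (a j x) * a j' x) * (\<Sum>k<D. cnj (v j k) * v j' k))"
      by (intro sum.cong refl) (simp only: sum_product)
    finally show ?thesis .
  qed
  define nW where "nW x = (\<Sum>k<D. (cmod (W x k))^2)" for x
  have nW0: "nW x \<ge> 0" for x unfolding nW_def by (simp add: sum_nonneg)
  have "cmod (\<Sum>x<N. \<Sum>k<D. cnj (W x k) * w x k) \<le> (\<Sum>x<N. cmod (\<Sum>k<D. cnj (W x k) * w x k))"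
    by (rule norm_sum)
  also have "\<dots> \<le> (\<Sum>x<N. sqrt (nW x) * 1)"
  proof (rule sum_mono)
    fix x assume "x \<in> {..<N}"
    then have x: "x < N" by simp
    have "cmod (\<Sum>k<D. cnj (W x k) * w x k) \<le> sqrt (\<Sum>k<D. (cmod (W x k))^2) * sqrt (\<Sum>k<D. (cmod (w x k))^2)"
      by (rule cmod_sum_prod_le)
    then show "cmod (\<Sum>k<D. cnj (W x k) * w x k) \<le> sqrt (nW x) * 1"
      unfolding nW_def w1[OF x] by simp
  qed
  also have "\<dots> \<le> sqrt (\<Sum>x<N. (sqrt (nW x))^2) * sqrt (\<Sum>x<N. 1^2)"
    by (rule cs_sqrt)
  also have "(\<Sum>x<N. (sqrt (nW x))^2) = Re (\<Sum>x<N. \<Sum>k<D. cnj (W x k) * W x k)"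
    using nW0 unfolding nW_def by (simp add: sum_cmod_sq_eq Re_sum)
  finally show ?thesis unfolding e1 e2 by (simp add: mult.commute)
qed

locale strat =
  fixes n dE :: nat and chi :: "complex vec" and U :: "complex mat" and d0 d1 d' :: nat
    and R :: "bool \<Rightarrow> complex mat"
    and Proj :: "bool \<Rightarrow> bool list \<Rightarrow> bool \<Rightarrow> bool list \<Rightarrow> complex mat"
  assumes st: "strategy n dE chi U d0 d1 d' R Proj"
begin

abbreviation "N \<equiv> (4::nat)^n"
abbreviation "D \<equiv> d0*d1*d'"
abbreviation "BS \<equiv> bitstrings n"

lemma chi_dim: "dim_vec chi = dE" using st unfolding strategy_def by auto
lemma chi_nrm: "cinner chi chi = 1" using st unfolding strategy_def by auto
lemma DN: "D = N*dE" using st unfolding strategy_def by auto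
lemma uni: "unitary (N*dE) U" using st unfolding strategy_def by auto
lemma Ucar: "U \<in> carrier_mat (N*dE) (N*dE)" using uni unfolding unitary_def by auto
lemma pmR: "projective_measurement d' UNIV R" using st unfolding strategy_def by auto
lemma pm0: "s \<in> BS \<Longrightarrow> projective_measurement d0 BS (Proj False s b)"
  using st unfolding strategy_def by (metis (full_types))
lemma pm1: "s \<in> BS \<Longrightarrow> projective_measurement d1 BS (Proj True s b)"
  using st unfolding strategy_def by (metis (full_types))

definition phi where "phi s r = Phi n chi U s (fst r) (snd r)"
definition Z where "Z s r b = kron_mat (kron_mat (Proj False s b (if b then snd r else fst r))
      (Proj True s b (if b then fst r else snd r))) (R b)"
definition uu where "uu s r b = Z s r b *\<^sub>v phi s r"
definition Ps where "Ps s r = Psi n s (fst r) (snd r)"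
definition ve where "ve x = U *\<^sub>v kron_vec (unit_vec N x) chi"

abbreviation "RS \<equiv> BS \<times> BS"

lemma phi_dim: "dim_vec (phi s r) = D" unfolding phi_def Phi_def using Ucar DN by simp

lemma P0h: "s \<in> BS \<Longrightarrow> e \<in> BS \<Longrightarrow> hproj d0 (Proj False s b e)" using pm_hproj[OF pm0] .
lemma P1h: "s \<in> BS \<Longrightarrow> e \<in> BS \<Longrightarrow> hproj d1 (Proj True s b e)" using pm_hproj[OF pm1] .
lemma Rh: "hproj d' (R b)" using pm_hproj[OF pmR] by simp

lemma Zh: "s \<in> BS \<Longrightarrow> r \<in> RS \<Longrightarrow> hproj D (Z s r b)"
  unfolding Z_def by (intro hproj_kron P0h P1h Rh) auto

lemma uu_dim: "s \<in> BS \<Longrightarrow> r \<in> RS \<Longrightarrow> dim_vec (uu s r b) = D"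
  unfolding uu_def using Zh[of s r b] unfolding hproj_def by auto

lemma uu_nrm: "s \<in> BS \<Longrightarrow> r \<in> RS \<Longrightarrow> cinner (phi s r) (Z s r b *\<^sub>v phi s r) = complex_of_real (nrm2 (uu s r b))"
  using hproj_sq[OF Zh[of s r b] phi_dim] cinner_self unfolding uu_def by metis

lemma Ps_dim: "dim_vec (Ps s r) = N" unfolding Ps_def by simp
lemma Ps_real: "x < N \<Longrightarrow> cnj (Ps s r $ x) = Ps s r $ x" unfolding Ps_def by (rule Psi_real)

lemma chi_car: "chi \<in> carrier_vec dE" using chi_dim by (rule carrier_vecI)

lemma phi_expand': "k < D \<Longrightarrow> phi s r $ k = (\<Sum>x<N. Ps s r $ x * ve x $ k)"
  unfolding phi_def Phi_def Ps_def ve_def using phi_expand[OF Ucar chi_dim, of "Psi n s (fst r) (snd r)" k] DN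
  by simp

lemma ve_dim: "dim_vec (ve x) = D" unfolding ve_def using Ucar DN by simp

lemma ve_one: "x < N \<Longrightarrow> (\<Sum>k<D. (cmod (ve x $ k))^2) = 1"
  using ve_nrm[OF uni chi_dim chi_nrm, of x] ve_dim unfolding ve_def nrm2_def by simp

lemma uu_expand:
  assumes s: "s \<in> BS" and r: "r \<in> RS"
  shows "nrm2 (uu s r b) = Re (\<Sum>x<N. \<Sum>k<D. Ps s r $ x * cnj (uu s r b $ k) * ve x $ k)"
proof -
  have "complex_of_real (nrm2 (uu s r b)) = cinner (phi s r) (Z s r b *\<^sub>v phi s r)"
    using uu_nrm[OF s r] by simp
  also have "\<dots> = cinner (uu s r b) (phi s r)"
    unfolding uu_def using hproj_inner[OF Zh[OF s r] phi_dim phi_dim] by simp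
  also have "\<dots> = (\<Sum>k<D. cnj (uu s r b $ k) * (\<Sum>x<N. Ps s r $ x * ve x $ k))"
    unfolding cinner_def uu_dim[OF s r] by (intro sum.cong refl) (simp add: phi_expand')
  also have "\<dots> = (\<Sum>k<D. \<Sum>x<N. Ps s r $ x * cnj (uu s r b $ k) * ve x $ k)"
    by (simp add: sum_distrib_left mult_ac)
  also have "\<dots> = (\<Sum>x<N. \<Sum>k<D. Ps s r $ x * cnj (uu s r b $ k) * ve x $ k)"
    by (rule sum.swap)
  finally show ?thesis by (metis Re_complex_of_real)
qed

lemma uu_X:
  assumes s: "s \<in> BS" and r: "r \<in> RS"
  shows "XX d1 d' (Proj False s b (if b then snd r else fst r)) *\<^sub>v uu s r b = uu s r b"
proof -
  let ?P = "Proj False s b (if b then snd r else fst r)"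
  have hP: "hproj d0 ?P" using P0h[OF s] r by auto
  have hQ: "hproj d1 (Proj True s b (if b then fst r else snd r))" using P1h[OF s] r by auto
  have "XX d1 d' ?P * Z s r b = Z s r b"
    unfolding Z_def using hP hQ Rh[of b] unfolding hproj_def by (subst XX_Z) auto
  moreover have "XX d1 d' ?P \<in> carrier_mat D D" using XX_carrier hP unfolding hproj_def by auto
  moreover have "Z s r b \<in> carrier_mat D D" using Zh[OF s r] unfolding hproj_def by auto
  ultimately show ?thesis unfolding uu_def
    using assoc_mult_mat_vec[of "XX d1 d' ?P" D D "Z s r b" D "phi s r", OF _ _ carrier_vecI[OF phi_dim]]
    by metis
qed

lemma uu_Y:
  assumes s: "s \<in> BS" and r: "r \<in> RS"
  shows "YY d0 d' (Proj True s b (if b then fst r else snd r)) *\<^sub>v uu s r b = uu s r b"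
proof -
  let ?P = "Proj True s b (if b then fst r else snd r)"
  have hP: "hproj d0 (Proj False s b (if b then snd r else fst r))" using P0h[OF s] r by auto
  have hQ: "hproj d1 ?P" using P1h[OF s] r by auto
  have "YY d0 d' ?P * Z s r b = Z s r b"
    unfolding Z_def using hP hQ Rh[of b] unfolding hproj_def by (subst YY_Z) auto
  moreover have "YY d0 d' ?P \<in> carrier_mat D D" using YY_carrier hQ unfolding hproj_def by auto
  moreover have "Z s r b \<in> carrier_mat D D" using Zh[OF s r] unfolding hproj_def by auto
  ultimately show ?thesis unfolding uu_def
    using assoc_mult_mat_vec[of "YY d0 d' ?P" D D "Z s r b" D "phi s r", OF _ _ carrier_vecI[OF phi_dim]]
    by metis
qed

lemma uu_R:
  assumes s: "s \<in> BS" and r: "r \<in> RS"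
  shows "RR d0 d1 (R b) *\<^sub>v uu s r b = uu s r b"
proof -
  have hP: "hproj d0 (Proj False s b (if b then snd r else fst r))" using P0h[OF s] r by auto
  have hQ: "hproj d1 (Proj True s b (if b then fst r else snd r))" using P1h[OF s] r by auto
  have "RR d0 d1 (R b) * Z s r b = Z s r b"
    unfolding Z_def using hP hQ Rh[of b] unfolding hproj_def by (subst RR_Z) auto
  moreover have "RR d0 d1 (R b) \<in> carrier_mat D D" using RR_carrier Rh[of b] unfolding hproj_def by auto
  moreover have "Z s r b \<in> carrier_mat D D" using Zh[OF s r] unfolding hproj_def by auto
  ultimately show ?thesis unfolding uu_def
    using assoc_mult_mat_vec[of "RR d0 d1 (R b)" D D "Z s r b" D "phi s r", OF _ _ carrier_vecI[OF phi_dim]]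
    by metis
qed

lemma uu_orth:
  assumes s: "s \<in> BS" and r: "r \<in> RS" and t: "t \<in> BS" and q: "q \<in> RS"
  shows "cinner (uu s r b) (uu t q (\<not> b)) = 0"
proof -
  have hR: "hproj D (RR d0 d1 (R b))" using RR_hproj Rh by blast
  have c1: "RR d0 d1 (R b) \<in> carrier_mat D D" "RR d0 d1 (R (\<not> b)) \<in> carrier_mat D D"
    using RR_carrier Rh unfolding hproj_def by blast+
  have Rc: "R b \<in> carrier_mat d' d'" "R (\<not> b) \<in> carrier_mat d' d'" using Rh unfolding hproj_def by auto
  have z: "RR d0 d1 (R b) * RR d0 d1 (R (\<not> b)) = 0\<^sub>m D D"
  proof -
    have "RR d0 d1 (R b) * RR d0 d1 (R (\<not> b)) = RR d0 d1 (0\<^sub>m d' d')"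
      using RR_RR[OF Rc] pm_bool_orth[OF pmR] by simp
    also have "\<dots> = 0\<^sub>m D D" unfolding RR_def
    proof (rule eq_matI)
      fix i j assume "i < dim_row (0\<^sub>m D D)" "j < dim_col (0\<^sub>m D D)"
      then have ij: "i < d0*d1*d'" "j < d0*d1*d'" by auto
      then show "kron_mat (kron_mat (1\<^sub>m d0) (1\<^sub>m d1)) (0\<^sub>m d' d') $$ (i, j) = 0\<^sub>m D D $$ (i, j)"
        using mod_lt_mult[OF ij(1)] mod_lt_mult[OF ij(2)] by (simp add: kron_mat_idx)
    qed auto
    finally show ?thesis .
  qed
  have "cinner (uu s r b) (uu t q (\<not> b)) = cinner (RR d0 d1 (R b) *\<^sub>v uu s r b) (RR d0 d1 (R (\<not> b)) *\<^sub>v uu t q (\<not> b))"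
    using uu_R[OF s r] uu_R[OF t q] by simp
  also have "\<dots> = cinner (uu s r b) (RR d0 d1 (R b) *\<^sub>v (RR d0 d1 (R (\<not> b)) *\<^sub>v uu t q (\<not> b)))"
    using hproj_inner[OF hR] uu_dim[OF s r] uu_dim[OF t q] c1 by simp
  also have "RR d0 d1 (R b) *\<^sub>v (RR d0 d1 (R (\<not> b)) *\<^sub>v uu t q (\<not> b)) = 0\<^sub>m D D *\<^sub>v uu t q (\<not> b)"
    using assoc_mult_mat_vec[OF c1 carrier_vecI[OF uu_dim[OF t q]]] z by simp
  also have "cinner (uu s r b) \<dots> = 0"
    unfolding cinner_def using uu_dim[OF s r] uu_dim[OF t q] by (simp add: scalar_prod_def)
  finally show ?thesis .
qed

lemma Gb_bound:
  assumes s: "s \<in> BS" and t: "t \<in> BS"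
  shows "cmod (\<Sum>r\<in>RS. \<Sum>q\<in>RS. cinner (Ps s r) (Ps t q) * cinner (uu s r b) (uu t q b))
    \<le> kap s t * sqrt (\<Sum>r\<in>RS. nrm2 (uu s r b)) * sqrt (\<Sum>q\<in>RS. nrm2 (uu t q b))"
proof -
  let ?X = "\<lambda>e. XX d1 d' (Proj False s b e)"
  let ?Y = "\<lambda>f. YY d0 d' (Proj True t b f)"
  let ?kk = "\<lambda>r::bool list \<times> bool list. if b then snd r else fst r"
  let ?ll = "\<lambda>q::bool list \<times> bool list. if b then fst q else snd q"
  have fin: "finite BS" "finite RS" by auto
  have hX: "\<And>e. e \<in> BS \<Longrightarrow> hproj D (?X e)" using XX_hproj P0h[OF s] by blast
  have hY: "\<And>f. f \<in> BS \<Longrightarrow> hproj D (?Y f)" using YY_hproj P1h[OF t] by blast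
  have comm: "\<And>e f. e \<in> BS \<Longrightarrow> f \<in> BS \<Longrightarrow> ?X e * ?Y f = ?Y f * ?X e"
  proof -
    fix e f assume e: "e \<in> BS" and f: "f \<in> BS"
    have "Proj False s b e \<in> carrier_mat d0 d0" "Proj True t b f \<in> carrier_mat d1 d1"
      using P0h[OF s e] P1h[OF t f] unfolding hproj_def by auto
    then show "?X e * ?Y f = ?Y f * ?X e" using XX_YY by metis
  qed
  have cX: "complete D BS ?X"
    using complete_XX[OF pm_complete[OF pm0[OF s]]] P0h[OF s] unfolding hproj_def by blast
  have cY: "complete D BS ?Y"
    using complete_YY[OF pm_complete[OF pm1[OF t]]] P1h[OF t] unfolding hproj_def by blast
  have kE: "\<And>r. r \<in> RS \<Longrightarrow> ?kk r \<in> BS" by auto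
  have lF: "\<And>q. q \<in> RS \<Longrightarrow> ?ll q \<in> BS" by auto
  have uX: "\<And>r. r \<in> RS \<Longrightarrow> ?X (?kk r) *\<^sub>v uu s r b = uu s r b" using uu_X[OF s] by blast
  have uY: "\<And>q. q \<in> RS \<Longrightarrow> ?Y (?ll q) *\<^sub>v uu t q b = uu t q b" using uu_Y[OF t] by blast
  have du: "\<And>r. r \<in> RS \<Longrightarrow> dim_vec (uu s r b) = D" using uu_dim[OF s] by blast
  have du': "\<And>q. q \<in> RS \<Longrightarrow> dim_vec (uu t q b) = D" using uu_dim[OF t] by blast
  have blk: "\<And>e f. e \<in> BS \<Longrightarrow> f \<in> BS \<Longrightarrow>
     bnd {r \<in> RS. ?kk r = e} {q \<in> RS. ?ll q = f} (\<lambda>r q. cinner (Ps s r) (Ps t q)) (kap s t)"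
    unfolding Ps_def using block_bnd[OF s t] by blast
  show ?thesis
    by (rule stepB[OF fin(1) fin(1) fin(2) fin(2) hX hY comm cX cY kE uX du lF uY du' blk kap_nonneg])
qed

lemma G_bound:
  assumes s: "s \<in> BS" and t: "t \<in> BS"
  shows "cmod (\<Sum>x\<in>RS \<times> UNIV. \<Sum>y\<in>RS \<times> UNIV. cinner (Ps s (fst x)) (Ps t (fst y)) * cinner (uu s (fst x) (snd x)) (uu t (fst y) (snd y)))
    \<le> kap s t * sqrt (\<Sum>x\<in>RS \<times> UNIV. nrm2 (uu s (fst x) (snd x))) * sqrt (\<Sum>y\<in>RS \<times> UNIV. nrm2 (uu t (fst y) (snd y)))"
proof -
  define F where "F r b q b' = cinner (Ps s r) (Ps t q) * cinner (uu s r b) (uu t q b')" for r b q b'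
  define A where "A b = (\<Sum>r\<in>RS. nrm2 (uu s r b))" for b
  define B where "B b = (\<Sum>q\<in>RS. nrm2 (uu t q b))" for b
  have A0: "A b \<ge> 0" for b unfolding A_def by (simp add: sum_nonneg nrm2_nonneg)
  have B0: "B b \<ge> 0" for b unfolding B_def by (simp add: sum_nonneg nrm2_nonneg)
  have "(\<Sum>x\<in>RS \<times> UNIV. \<Sum>y\<in>RS \<times> UNIV. cinner (Ps s (fst x)) (Ps t (fst y)) * cinner (uu s (fst x) (snd x)) (uu t (fst y) (snd y)))
     = (\<Sum>r\<in>RS. \<Sum>b\<in>UNIV. \<Sum>q\<in>RS. \<Sum>b'\<in>UNIV. F r b q b')"
    unfolding F_def by (simp add: sum_prod_split)
  also have "\<dots> = (\<Sum>b\<in>UNIV. \<Sum>r\<in>RS. \<Sum>q\<in>RS. \<Sum>b'\<in>UNIV. F r b q b')"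
    by (rule sum.swap)
  also have "\<dots> = (\<Sum>b\<in>UNIV. \<Sum>r\<in>RS. \<Sum>q\<in>RS. F r b q b)"
  proof (intro sum.cong refl)
    fix b r q assume r: "r \<in> RS" and q: "q \<in> RS"
    have "F r b q (\<not> b) = 0" unfolding F_def using uu_orth[OF s r t q] by simp
    then show "(\<Sum>b'\<in>UNIV. F r b q b') = F r b q b" unfolding sum_bool by (cases b) auto
  qed
  finally have eq: "(\<Sum>x\<in>RS \<times> UNIV. \<Sum>y\<in>RS \<times> UNIV. cinner (Ps s (fst x)) (Ps t (fst y)) * cinner (uu s (fst x) (snd x)) (uu t (fst y) (snd y)))
     = (\<Sum>b\<in>UNIV. \<Sum>r\<in>RS. \<Sum>q\<in>RS. F r b q b)" .
  have "cmod (\<Sum>b\<in>UNIV. \<Sum>r\<in>RS. \<Sum>q\<in>RS. F r b q b) \<le> (\<Sum>b\<in>UNIV. cmod (\<Sum>r\<in>RS. \<Sum>q\<in>RS. F r b q b))"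
    by (rule norm_sum)
  also have "\<dots> \<le> (\<Sum>b\<in>UNIV. kap s t * (sqrt (A b) * sqrt (B b)))"
    using Gb_bound[OF s t] unfolding F_def A_def B_def by (intro sum_mono) (simp add: mult_ac)
  also have "\<dots> = kap s t * (\<Sum>b\<in>UNIV. sqrt (A b) * sqrt (B b))" by (simp add: sum_distrib_left)
  also have "\<dots> \<le> kap s t * (sqrt (\<Sum>b\<in>UNIV. (sqrt (A b))^2) * sqrt (\<Sum>b\<in>UNIV. (sqrt (B b))^2))"
    by (intro mult_left_mono cs_sqrt kap_nonneg)
  also have "(\<Sum>b\<in>UNIV. (sqrt (A b))^2) = (\<Sum>x\<in>RS \<times> UNIV. nrm2 (uu s (fst x) (snd x)))"
    using A0 unfolding A_def by (simp add: sum_prod_split sum.swap[of _ "UNIV::bool set"])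
  also have "(\<Sum>b\<in>UNIV. (sqrt (B b))^2) = (\<Sum>y\<in>RS \<times> UNIV. nrm2 (uu t (fst y) (snd y)))"
    using B0 unfolding B_def by (simp add: sum_prod_split sum.swap[of _ "UNIV::bool set"])
  finally show ?thesis unfolding eq by (simp add: mult_ac)
qed

definition T where "T = (\<Sum>s\<in>BS. \<Sum>x\<in>RS \<times> UNIV. nrm2 (uu s (fst x) (snd x)))"

lemma T_nonneg: "T \<ge> 0" unfolding T_def by (simp add: sum_nonneg nrm2_nonneg)

lemma T_bound: "T \<le> real N * (1 + 1 / sqrt 2)^n"
proof -
  define J where "J = BS \<times> (RS \<times> (UNIV::bool set))"
  define a where "a j x = Ps (fst j) (fst (snd j)) $ x" for j :: "bool list \<times> (bool list \<times> bool list) \<times> bool" and x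
  define v where "v j k = uu (fst j) (fst (snd j)) (snd (snd j)) $ k" for j :: "bool list \<times> (bool list \<times> bool list) \<times> bool" and k
  define w where "w x k = ve x $ k" for x k
  define C where "C = (1 + 1 / sqrt 2)^n"
  define S where "S s = (\<Sum>x\<in>RS \<times> UNIV. nrm2 (uu s (fst x) (snd x)))" for s
  have C0: "C \<ge> 0" unfolding C_def by simp
  have S0: "S s \<ge> 0" for s unfolding S_def by (simp add: sum_nonneg nrm2_nonneg)
  have finJ: "finite J" unfolding J_def by simp
  have T1: "T = Re (\<Sum>j\<in>J. \<Sum>x<N. \<Sum>k<D. a j x * cnj (v j k) * w x k)"
  proof -
    have "T = (\<Sum>j\<in>J. nrm2 (uu (fst j) (fst (snd j)) (snd (snd j))))"
      unfolding T_def J_def by (simp add: sum_prod_split)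
    also have "\<dots> = (\<Sum>j\<in>J. Re (\<Sum>x<N. \<Sum>k<D. a j x * cnj (v j k) * w x k))"
    proof (intro sum.cong refl)
      fix j assume "j \<in> J"
      then have j: "fst j \<in> BS" "fst (snd j) \<in> RS" unfolding J_def by (auto simp: mem_Times_iff)
      show "nrm2 (uu (fst j) (fst (snd j)) (snd (snd j))) = Re (\<Sum>x<N. \<Sum>k<D. a j x * cnj (v j k) * w x k)"
        unfolding a_def v_def w_def by (rule uu_expand[OF j])
    qed
    finally show ?thesis by (simp add: Re_sum)
  qed
  have gram: "(\<Sum>j\<in>J. \<Sum>j'\<in>J. (\<Sum>x<N. cnj (a j x) * a j' x) * (\<Sum>k<D. cnj (v j k) * v j' k))
     = (\<Sum>s\<in>BS. \<Sum>t\<in>BS. \<Sum>x\<in>RS \<times> UNIV. \<Sum>y\<in>RS \<times> UNIV.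
         cinner (Ps s (fst x)) (Ps t (fst y)) * cinner (uu s (fst x) (snd x)) (uu t (fst y) (snd y)))"
  proof -
    have "(\<Sum>j\<in>J. \<Sum>j'\<in>J. (\<Sum>x<N. cnj (a j x) * a j' x) * (\<Sum>k<D. cnj (v j k) * v j' k))
       = (\<Sum>s\<in>BS. \<Sum>x\<in>RS \<times> UNIV. \<Sum>t\<in>BS. \<Sum>y\<in>RS \<times> UNIV.
         cinner (Ps s (fst x)) (Ps t (fst y)) * cinner (uu s (fst x) (snd x)) (uu t (fst y) (snd y)))"
      unfolding J_def sum_prod_split[of _ BS "RS \<times> UNIV"]
      by (intro sum.cong refl) (auto simp: a_def v_def cinner_def Ps_dim uu_dim)
    also have "\<dots> = (\<Sum>s\<in>BS. \<Sum>t\<in>BS. \<Sum>x\<in>RS \<times> UNIV. \<Sum>y\<in>RS \<times> UNIV.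
         cinner (Ps s (fst x)) (Ps t (fst y)) * cinner (uu s (fst x) (snd x)) (uu t (fst y) (snd y)))"
      by (intro sum.cong refl) (rule sum.swap)
    finally show ?thesis .
  qed
  have "T \<le> cmod (\<Sum>j\<in>J. \<Sum>x<N. \<Sum>k<D. a j x * cnj (v j k) * w x k)"
    unfolding T1 by (rule complex_Re_le_cmod)
  also have "\<dots> \<le> sqrt (real N) * sqrt (Re (\<Sum>j\<in>J. \<Sum>j'\<in>J. (\<Sum>x<N. cnj (a j x) * a j' x) * (\<Sum>k<D. cnj (v j k) * v j' k)))"
    by (rule core_abstract[OF finJ]) (auto simp: a_def w_def Ps_real ve_one)
  also have "Re (\<Sum>j\<in>J. \<Sum>j'\<in>J. (\<Sum>x<N. cnj (a j x) * a j' x) * (\<Sum>k<D. cnj (v j k) * v j' k)) \<le> C * T"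
  proof -
    have "Re (\<Sum>j\<in>J. \<Sum>j'\<in>J. (\<Sum>x<N. cnj (a j x) * a j' x) * (\<Sum>k<D. cnj (v j k) * v j' k))
       \<le> cmod (\<Sum>j\<in>J. \<Sum>j'\<in>J. (\<Sum>x<N. cnj (a j x) * a j' x) * (\<Sum>k<D. cnj (v j k) * v j' k))"
      by (rule complex_Re_le_cmod)
    also have "\<dots> \<le> (\<Sum>s\<in>BS. \<Sum>t\<in>BS. cmod (\<Sum>x\<in>RS \<times> UNIV. \<Sum>y\<in>RS \<times> UNIV.
         cinner (Ps s (fst x)) (Ps t (fst y)) * cinner (uu s (fst x) (snd x)) (uu t (fst y) (snd y))))"
      unfolding gram by (rule order_trans[OF norm_sum sum_mono[OF norm_sum]])
    also have "\<dots> \<le> (\<Sum>s\<in>BS. \<Sum>t\<in>BS. kap s t * (sqrt (S s) * sqrt (S t)))"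
      using G_bound unfolding S_def by (intro sum_mono) (simp add: mult_ac)
    also have "\<dots> \<le> C * (\<Sum>s\<in>BS. S s)" unfolding C_def by (rule amgm_sum[OF S0])
    also have "(\<Sum>s\<in>BS. S s) = T" unfolding S_def T_def ..
    finally show ?thesis .
  qed
  then have "sqrt (Re (\<Sum>j\<in>J. \<Sum>j'\<in>J. (\<Sum>x<N. cnj (a j x) * a j' x) * (\<Sum>k<D. cnj (v j k) * v j' k))) \<le> sqrt (C * T)"
    by (rule real_sqrt_le_mono)
  then have "sqrt (real N) * sqrt (Re (\<Sum>j\<in>J. \<Sum>j'\<in>J. (\<Sum>x<N. cnj (a j x) * a j' x) * (\<Sum>k<D. cnj (v j k) * v j' k)))
      \<le> sqrt (real N) * sqrt (C * T)" by (rule mult_left_mono) simp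
  finally have TT: "T \<le> sqrt (real N) * sqrt (C * T)" .
  have "T \<le> real N * C"
  proof (cases "T = 0")
    case True then show ?thesis using C0 by simp
  next
    case False
    then have Tp: "T > 0" using T_nonneg by simp
    have "T * T \<le> (sqrt (real N) * sqrt (C * T)) * (sqrt (real N) * sqrt (C * T))"
      using TT T_nonneg by (intro mult_mono) auto
    also have "\<dots> = real N * (C * T)" using C0 T_nonneg
      by (simp add: real_sqrt_mult[symmetric] mult_ac)
    finally have "T * T \<le> (real N * C) * T" by (simp add: mult_ac)
    then show ?thesis using Tp by simp
  qed
  then show ?thesis unfolding C_def .
qed

lemma success_eq: "Re (success_prob n chi U R Proj) = T / 2^(3*n)"
proof -
  have inner: "(let rb = (if b then r1 else r0); rnb = (if b then r0 else r1); \<Phi> = Phi n chi U s r0 r1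
        in cinner \<Phi> (kron_mat (kron_mat (Proj False s b rb) (Proj True s b rnb)) (R b) *\<^sub>v \<Phi>))
      = complex_of_real (nrm2 (uu s (r0,r1) b))"
    if "s \<in> BS" "r0 \<in> BS" "r1 \<in> BS" for s r0 r1 b
    using uu_nrm[of s "(r0,r1)" b] that unfolding Let_def phi_def Z_def by (cases b) simp_all
  have "(\<Sum>r0\<in>BS. \<Sum>r1\<in>BS. \<Sum>s\<in>BS. \<Sum>b\<in>(UNIV::bool set).
        let rb = (if b then r1 else r0); rnb = (if b then r0 else r1); \<Phi> = Phi n chi U s r0 r1
        in cinner \<Phi> (kron_mat (kron_mat (Proj False s b rb) (Proj True s b rnb)) (R b) *\<^sub>v \<Phi>))
     = (\<Sum>r0\<in>BS. \<Sum>r1\<in>BS. \<Sum>s\<in>BS. \<Sum>b\<in>(UNIV::bool set). complex_of_real (nrm2 (uu s (r0,r1) b)))"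
    using inner by (intro sum.cong refl) auto
  also have "\<dots> = (\<Sum>r0\<in>BS. \<Sum>s\<in>BS. \<Sum>r1\<in>BS. \<Sum>b\<in>(UNIV::bool set). complex_of_real (nrm2 (uu s (r0,r1) b)))"
    by (rule sum.cong[OF refl], rule sum.swap)
  also have "\<dots> = (\<Sum>s\<in>BS. \<Sum>r0\<in>BS. \<Sum>r1\<in>BS. \<Sum>b\<in>(UNIV::bool set). complex_of_real (nrm2 (uu s (r0,r1) b)))"
    by (rule sum.swap)
  also have "\<dots> = complex_of_real T"
    unfolding T_def by (simp add: sum_prod_split)
  finally have "success_prob n chi U R Proj = 1 / 2^(3*n) * complex_of_real T"
    unfolding success_prob_def by simp
  then show ?thesis by simp
qed

end

theorem mainTheorem1:
  fixes n dE d0 d1 d' :: nat and chi :: "complex vec" and U :: "complex mat"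
    and R :: "bool \<Rightarrow> complex mat"
    and Proj :: "bool \<Rightarrow> bool list \<Rightarrow> bool \<Rightarrow> bool list \<Rightarrow> complex mat"
  assumes "n \<ge> 1"
    and "strategy n dE chi U d0 d1 d' R Proj"
  shows "Re (success_prob n chi U R Proj) \<le> (1/2 + 1 / (2 * sqrt 2)) ^ n"
proof -
  interpret strat n dE chi U d0 d1 d' R Proj by (rule strat.intro[OF assms(2)])
  have "Re (success_prob n chi U R Proj) = T / 2^(3*n)" by (rule success_eq)
  also have "\<dots> \<le> (real (4^n) * (1 + 1 / sqrt 2)^n) / 2^(3*n)"
    using T_bound by (intro divide_right_mono) auto
  also have "\<dots> = ((1 + 1 / sqrt 2) / 2)^n"
  proof -
    have "(2::real)^(3*n) = (2^3)^n" by (rule power_mult)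
    also have "\<dots> = (4 * 2)^n" by simp
    also have "\<dots> = 4^n * 2^n" by (rule power_mult_distrib)
    finally have "(2::real)^(3*n) = 4^n * 2^n" .
    then show ?thesis by (simp add: power_divide)
  qed
  also have "(1 + 1 / sqrt 2) / 2 = 1/2 + 1 / (2 * sqrt 2)" by (simp add: field_simps)
  finally show ?thesis .
qed

end
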